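(* Let $T=((\Omega,\mathcal{A}),\{(\Omega,\mathcal{M}_i)\}_{i\in N},\{t_i\}_{i\in N})$ be a type space. The players' beliefs in $T$ are universally consistent if and only if for every finite $I\subseteq N$ and every $I$-common certainty component $S$, the players' beliefs in the induced type space $T_S$ (with player set $I$) are consistent.
   Context: A field on a set $X$ is a collection of subsets of $X$ containing $X$ and closed under complements and finite intersections. For a field $\mathcal{A}$ on $\Omega$, $\mathrm{pba}(\Omega,\mathcal{A})$ is the set of finitely additive nonnegative $P:\mathcal{A}\to\mathbb{R}$ with $P(\Omega)=1$; $B(\Omega,\mathcal{A})$ the sup-norm closure of the linear span of indicators of sets in $\mathcal{A}$; the space of bounded finitely additive set functions carries the weak* topology (weakest making $\mu\mapsto\int f\,d\mu$ continuous for all $f\in B(\Omega,\mathcal{A})$), $\overline{\,\cdot\,}^\ast$ denotes weak* closure. A type space is $((\Omega,\mathcal{A}),\{(\Omega,\mathcal{M}_i)\}_{i\in N},\{t_i\}_{i\in N})$ with $N$ a nonempty set of players, fields $\mathcal{M}_i\subseteq\mathcal{A}$ on a set $\Omega$, and $t_i:\Omega\times\mathcal{A}\to[0,1]$ with: $t_i(\omega,\cdot)\in\mathrm{pba}(\Omega,\mathcal{A})$; $t_i(\cdot,E)\in B(\Omega,\mathcal{M}_i)$ for all $E\in\mathcal{A}$; $t_i(\omega,E)=1$ whenever $E\in\mathcal{M}_i$, $\omega\in E$. For each player $i$, $\Pi_i=\overline{\mathrm{conv}\{t_i(\omega,\cdot):\omega\in\Omega\}}^\ast$ (equivalently the $P\in\mathrm{pba}(\Omega,\mathcal{A})$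 with $P(E\cap F)=\int_F t_i(\cdot,E)\,dP$ for all $E\in\mathcal{A},F\in\mathcal{M}_i$). The players' beliefs in a type space are consistent if $\bigcap_{i\in J}\Pi_i\ne\emptyset$ for every finite set $J$ of its players. For $I\subseteq N$, a nonempty $S\subseteq\Omega$ is an $I$-common certainty component if there is $E\in\mathcal{A}$ with $E\subseteq S$ and $t_i(\omega,E)=1$ for all $\omega\in S$, $i\in I$. The induced type space is $T_S=((S,\mathcal{A}^S),\{(S,\mathcal{M}_i^S)\}_{i\in I},\{t_i^S\}_{i\in I})$ with $\mathcal{A}^S=\{F\cap S:F\in\mathcal{A}\}$, $\mathcal{M}_i^S=\{F\cap S:F\in\mathcal{M}_i\}$, $t_i^S(\omega,F\cap S)=t_i(\omega,F)$ for $\omega\in S$, $F\in\mathcal{A}$. The players' beliefs in $T$ are universally consistent if for every finite $I\subseteq N$ and every $I$-common certainty component $S$ there exists $P\in\bigcap_{i\in I}\Pi_i$ with $\inf\{P(E):E\in\mathcal{A},S\subseteq E\}>0$. *)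

theory Defs
  imports "HOL-Analysis.Analysis"
begin

text \<open>Fields on a set are the library's algebras of sets: "algebra X F".
  Set functions are total functions on sets; a set function on the field A is represented
  extensionally (value 0 outside A).\<close>

definition restrict_sf :: "'w set set \<Rightarrow> ('w set \<Rightarrow> real) \<Rightarrow> 'w set \<Rightarrow> real" where
  "restrict_sf A g = (\<lambda>E. if E \<in> A then g E else 0)"

definition ba :: "'w set \<Rightarrow> 'w set set \<Rightarrow> ('w set \<Rightarrow> real) set" where
  "ba \<Omega> A = {\<mu>. (\<forall>E. E \<notin> A \<longrightarrow> \<mu> E = 0)
      \<and> (\<forall>E\<in>A. \<forall>F\<in>A. E \<inter> F = {} \<longrightarrow> \<mu> (E \<union> F) = \<mu> E + \<mu> F)
      \<and> (\<exists>c. \<forall>E\<in>A. \<bar>\<mu> E\<bar> \<le> c)}"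

definition pba :: "'w set \<Rightarrow> 'w set set \<Rightarrow> ('w set \<Rightarrow> real) set" where
  "pba \<Omega> A = {P. (\<forall>E. E \<notin> A \<longrightarrow> P E = 0)
      \<and> (\<forall>E\<in>A. \<forall>F\<in>A. E \<inter> F = {} \<longrightarrow> P (E \<union> F) = P E + P F)
      \<and> (\<forall>E\<in>A. 0 \<le> P E) \<and> P \<Omega> = 1}"

definition simple_funs :: "'w set \<Rightarrow> 'w set set \<Rightarrow> ('w \<Rightarrow> real) set" where
  "simple_funs \<Omega> A = {f. \<exists>(k::nat) c E. (\<forall>j<k. E j \<in> A)
      \<and> (\<forall>x\<in>\<Omega>. f x = (\<Sum>j<k. c j * indicator (E j) x))}"

definition Bfun :: "'w set \<Rightarrow> 'w set set \<Rightarrow> ('w \<Rightarrow> real) set" where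
  "Bfun \<Omega> A = {f. \<forall>\<epsilon>>0. \<exists>s\<in>simple_funs \<Omega> A. \<forall>x\<in>\<Omega>. \<bar>f x - s x\<bar> < \<epsilon>}"

definition simple_integral :: "'w set \<Rightarrow> 'w set set \<Rightarrow> ('w set \<Rightarrow> real) \<Rightarrow> ('w \<Rightarrow> real) \<Rightarrow> real" where
  "simple_integral \<Omega> A \<mu> f = (THE r. \<exists>(k::nat) c E. (\<forall>j<k. E j \<in> A)
      \<and> (\<forall>x\<in>\<Omega>. f x = (\<Sum>j<k. c j * indicator (E j) x))
      \<and> r = (\<Sum>j<k. c j * \<mu> (E j)))"

definition charge_integral :: "'w set \<Rightarrow> 'w set set \<Rightarrow> ('w set \<Rightarrow> real) \<Rightarrow> ('w \<Rightarrow> real) \<Rightarrow> real" where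
  "charge_integral \<Omega> A \<mu> f = (THE r. \<forall>\<epsilon>>0. \<exists>\<delta>>0. \<forall>s\<in>simple_funs \<Omega> A.
      (\<forall>x\<in>\<Omega>. \<bar>f x - s x\<bar> < \<delta>) \<longrightarrow> \<bar>simple_integral \<Omega> A \<mu> s - r\<bar> < \<epsilon>)"

definition wstar_top :: "'w set \<Rightarrow> 'w set set \<Rightarrow> ('w set \<Rightarrow> real) topology" where
  "wstar_top \<Omega> A = topology_generated_by
     {{\<mu> \<in> ba \<Omega> A. charge_integral \<Omega> A \<mu> f \<in> U} | f U. f \<in> Bfun \<Omega> A \<and> open U}"

definition conv_sf :: "('w set \<Rightarrow> real) set \<Rightarrow> ('w set \<Rightarrow> real) set" where
  "conv_sf K = {\<mu>. \<exists>(k::nat) a p. 0 < k \<and> (\<forall>j<k. 0 \<le> a j \<and> p j \<in> K) \<and> (\<Sum>j<k. a j) = 1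
      \<and> \<mu> = (\<lambda>E. \<Sum>j<k. a j * p j E)}"

definition type_space :: "'w set \<Rightarrow> 'w set set \<Rightarrow> 'i set \<Rightarrow> ('i \<Rightarrow> 'w set set)
    \<Rightarrow> ('i \<Rightarrow> 'w \<Rightarrow> 'w set \<Rightarrow> real) \<Rightarrow> bool" where
  "type_space \<Omega> A N M t \<longleftrightarrow> N \<noteq> {} \<and> algebra \<Omega> A
     \<and> (\<forall>i\<in>N. algebra \<Omega> (M i) \<and> M i \<subseteq> A)
     \<and> (\<forall>i\<in>N. \<forall>\<omega>\<in>\<Omega>. \<forall>E\<in>A. 0 \<le> t i \<omega> E \<and> t i \<omega> E \<le> 1)
     \<and> (\<forall>i\<in>N. \<forall>\<omega>\<in>\<Omega>. restrict_sf A (t i \<omega>) \<in> pba \<Omega> A)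
     \<and> (\<forall>i\<in>N. \<forall>E\<in>A. (\<lambda>\<omega>. t i \<omega> E) \<in> Bfun \<Omega> (M i))
     \<and> (\<forall>i\<in>N. \<forall>E\<in>M i. \<forall>\<omega>\<in>E. t i \<omega> E = 1)"

definition Pi_set :: "'w set \<Rightarrow> 'w set set \<Rightarrow> ('i \<Rightarrow> 'w \<Rightarrow> 'w set \<Rightarrow> real) \<Rightarrow> 'i
    \<Rightarrow> ('w set \<Rightarrow> real) set" where
  "Pi_set \<Omega> A t i = (wstar_top \<Omega> A) closure_of
     (conv_sf {restrict_sf A (t i \<omega>) | \<omega>. \<omega> \<in> \<Omega>})"

definition consistent :: "'w set \<Rightarrow> 'w set set \<Rightarrow> 'i set
    \<Rightarrow> ('i \<Rightarrow> 'w \<Rightarrow> 'w set \<Rightarrow> real) \<Rightarrow> bool" where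
  "consistent \<Omega> A N t \<longleftrightarrow>
     (\<forall>J. finite J \<and> J \<subseteq> N \<longrightarrow> (\<Inter>i\<in>J. Pi_set \<Omega> A t i) \<noteq> {})"

definition common_certainty_component :: "'w set \<Rightarrow> 'w set set
    \<Rightarrow> ('i \<Rightarrow> 'w \<Rightarrow> 'w set \<Rightarrow> real) \<Rightarrow> 'i set \<Rightarrow> 'w set \<Rightarrow> bool" where
  "common_certainty_component \<Omega> A t I S \<longleftrightarrow> S \<noteq> {} \<and> S \<subseteq> \<Omega>
     \<and> (\<exists>E\<in>A. E \<subseteq> S \<and> (\<forall>\<omega>\<in>S. \<forall>i\<in>I. t i \<omega> E = 1))"

text \<open>Induced type space on S: trace fields and t_i^S(\<omega>, F \<inter> S) = t_i(\<omega>, F).\<close>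
definition trace_field :: "'w set set \<Rightarrow> 'w set \<Rightarrow> 'w set set" where
  "trace_field A S = {F \<inter> S | F. F \<in> A}"

definition induced_t :: "'w set set \<Rightarrow> 'w set \<Rightarrow> ('i \<Rightarrow> 'w \<Rightarrow> 'w set \<Rightarrow> real)
    \<Rightarrow> 'i \<Rightarrow> 'w \<Rightarrow> 'w set \<Rightarrow> real" where
  "induced_t A S t i \<omega> G = t i \<omega> (SOME F. F \<in> A \<and> G = F \<inter> S)"

definition universally_consistent :: "'w set \<Rightarrow> 'w set set \<Rightarrow> 'i set
    \<Rightarrow> ('i \<Rightarrow> 'w \<Rightarrow> 'w set \<Rightarrow> real) \<Rightarrow> bool" where
  "universally_consistent \<Omega> A N t \<longleftrightarrow>
     (\<forall>I S. finite I \<and> I \<subseteq> N \<and> common_certainty_component \<Omega> A t I S \<longrightarrow>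
        (\<exists>P\<in>pba \<Omega> A. (\<forall>i\<in>I. P \<in> Pi_set \<Omega> A t i)
            \<and> Inf {P E | E. E \<in> A \<and> S \<subseteq> E} > 0))"

end

theory Submission
  imports Defs
begin


lemma pba_vals:
  assumes "P \<in> pba \<Omega> A"
  shows "\<And>E. E \<notin> A \<Longrightarrow> P E = 0"
    and "\<And>E F. E \<in> A \<Longrightarrow> F \<in> A \<Longrightarrow> E \<inter> F = {} \<Longrightarrow> P (E \<union> F) = P E + P F"
    and "\<And>E. E \<in> A \<Longrightarrow> 0 \<le> P E" and "P \<Omega> = 1"
  using assms unfolding pba_def by auto

lemma alg_facts:
  assumes "algebra \<Omega> A"
  shows "{} \<in> A" "\<Omega> \<in> A" "\<And>a b. a \<in> A \<Longrightarrow> b \<in> A \<Longrightarrow> a \<inter> b \<in> A"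
    "\<And>a b. a \<in> A \<Longrightarrow> b \<in> A \<Longrightarrow> a \<union> b \<in> A"
    "\<And>a b. a \<in> A \<Longrightarrow> b \<in> A \<Longrightarrow> a - b \<in> A"
    "\<And>a. a \<in> A \<Longrightarrow> a \<subseteq> \<Omega>"
proof -
  interpret algebra \<Omega> A by (rule assms)
  show "{} \<in> A" "\<Omega> \<in> A" "\<And>a b. a \<in> A \<Longrightarrow> b \<in> A \<Longrightarrow> a \<inter> b \<in> A"
    "\<And>a b. a \<in> A \<Longrightarrow> b \<in> A \<Longrightarrow> a \<union> b \<in> A"
    "\<And>a b. a \<in> A \<Longrightarrow> b \<in> A \<Longrightarrow> a - b \<in> A"
    "\<And>a. a \<in> A \<Longrightarrow> a \<subseteq> \<Omega>" using sets_into_space by auto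
qed

context
  fixes \<Omega> :: "'w set" and A :: "'w set set" and P :: "'w set \<Rightarrow> real"
  assumes alg: "algebra \<Omega> A" and P: "P \<in> pba \<Omega> A"
begin

lemma pba_empty: "P {} = 0"
proof -
  have "{} \<in> A" using alg by (simp add: alg_facts)
  then have "P ({} \<union> {}) = P {} + P {}" using pba_vals(2)[OF P] by blast
  then show ?thesis by simp
qed

lemma pba_split: "F \<in> A \<Longrightarrow> G \<in> A \<Longrightarrow> P F = P (F \<inter> G) + P (F - G)"
proof -
  assume F: "F \<in> A" and G: "G \<in> A"
  have "F = (F \<inter> G) \<union> (F - G)" by blast
  moreover have "F \<inter> G \<in> A" "F - G \<in> A" using F G alg
    by (auto simp: alg_facts)
  ultimately show ?thesis using pba_vals(2)[OF P, of "F \<inter> G" "F - G"] by auto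
qed

lemma pba_mono: "F \<in> A \<Longrightarrow> G \<in> A \<Longrightarrow> F \<subseteq> G \<Longrightarrow> P F \<le> P G"
proof -
  assume F: "F \<in> A" and G: "G \<in> A" and s: "F \<subseteq> G"
  have "P G = P (G \<inter> F) + P (G - F)" using pba_split F G by blast
  moreover have "G \<inter> F = F" using s by blast
  moreover have "0 \<le> P (G - F)" using pba_vals(3)[OF P] F G alg by (simp add: alg_facts)
  ultimately show ?thesis by simp
qed

lemma pba_le1: "F \<in> A \<Longrightarrow> P F \<le> 1"
  using pba_mono[of F \<Omega>] alg pba_vals(4)[OF P]
  by (simp add: alg_facts)

lemma pba_compl: "F \<in> A \<Longrightarrow> P (\<Omega> - F) = 1 - P F"
  using pba_split[of \<Omega> F] alg pba_vals(4)[OF P]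
  by (simp add: alg_facts Int_absorb1)

lemma pba_abs_le1: "F \<in> A \<Longrightarrow> \<bar>P F\<bar> \<le> 1"
  using pba_le1 pba_vals(3)[OF P] by fastforce

lemma pba_ba: "P \<in> ba \<Omega> A"
  using P pba_abs_le1 unfolding pba_def ba_def by blast

end



lemma add_empty:
  fixes \<mu> :: "'w set \<Rightarrow> real"
  assumes "algebra \<Omega> A" "\<forall>E\<in>A. \<forall>F\<in>A. E \<inter> F = {} \<longrightarrow> \<mu> (E \<union> F) = \<mu> E + \<mu> F"
  shows "\<mu> {} = 0"
proof -
  have "{} \<in> A" using alg_facts(1)[OF assms(1)] .
  then have "\<mu> ({} \<union> {}) = \<mu> {} + \<mu> {}" using assms(2) by blast
  then show ?thesis by simp
qed

lemma pn_bound: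
  fixes k :: nat and \<mu> :: "'w set \<Rightarrow> real"
  assumes alg: "algebra \<Omega> A" and add: "\<forall>E\<in>A. \<forall>F\<in>A. E \<inter> F = {} \<longrightarrow> \<mu> (E \<union> F) = \<mu> E + \<mu> F"
    and E: "\<forall>j<k. E j \<in> A"
  shows "D \<in> A \<Longrightarrow> (\<forall>x\<in>D. \<bar>a + (\<Sum>j<k. c j * indicator (E j) x)\<bar> \<le> M) \<Longrightarrow>
    \<exists>P N. P \<in> A \<and> N \<in> A \<and> P \<subseteq> D \<and> N \<subseteq> D \<and>
      a * \<mu> D + (\<Sum>j<k. c j * \<mu> (E j \<inter> D)) \<le> M * (\<mu> P - \<mu> N)"
  using E
proof (induction k arbitrary: D a)
  case 0
  have e: "\<mu> {} = 0" using add_empty[OF alg add] .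
  show ?case
  proof (cases "D = {}")
    case True
    then show ?thesis using e alg_facts(1)[OF alg] by (intro exI[of _ "{}"]) auto
  next
    case False
    then have aM: "\<bar>a\<bar> \<le> M" using 0 by auto
    show ?thesis
    proof (cases "\<mu> D \<ge> 0")
      case True
      have "a * \<mu> D \<le> M * (\<mu> D - \<mu> {})" using e aM True
      proof -
        have "a * \<mu> D \<le> \<bar>a\<bar> * \<mu> D" using True by (intro mult_right_mono) auto
        also have "\<dots> \<le> M * \<mu> D" using True aM by (intro mult_right_mono) auto
        finally show ?thesis using e by simp
      qed
      then show ?thesis using 0 alg_facts(1)[OF alg] by (intro exI[of _ D] exI[of _ "{}"]) auto
    next
      case False
      have "a * \<mu> D \<le> M * (\<mu> {} - \<mu> D)" using e aM False
      proof -
        have "a * \<mu> D = (- a) * (- \<mu> D)" by simp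
        also have "\<dots> \<le> \<bar>a\<bar> * (- \<mu> D)" using False by (intro mult_right_mono) auto
        also have "\<dots> \<le> M * (- \<mu> D)" using False aM by (intro mult_right_mono) auto
        finally show ?thesis using e by simp
      qed
      then show ?thesis using 0 alg_facts(1)[OF alg] by (intro exI[of _ "{}"] exI[of _ D]) auto
    qed
  qed
next
  case (Suc k)
  define D1 where "D1 = D \<inter> E k"
  define D2 where "D2 = D - E k"
  have Ek: "E k \<in> A" using Suc.prems by auto
  have D1A: "D1 \<in> A" and D2A: "D2 \<in> A" unfolding D1_def D2_def using alg_facts[OF alg] Ek Suc.prems by auto
  have h1: "\<forall>x\<in>D1. \<bar>(a + c k) + (\<Sum>j<k. c j * indicator (E j) x)\<bar> \<le> M"
  proof
    fix x assume "x \<in> D1"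
    then have "x \<in> D" "x \<in> E k" unfolding D1_def by auto
    then show "\<bar>(a + c k) + (\<Sum>j<k. c j * indicator (E j) x)\<bar> \<le> M"
      using Suc.prems(2) by (auto simp: algebra_simps)
  qed
  have h2: "\<forall>x\<in>D2. \<bar>a + (\<Sum>j<k. c j * indicator (E j) x)\<bar> \<le> M"
  proof
    fix x assume "x \<in> D2"
    then have "x \<in> D" "x \<notin> E k" unfolding D2_def by auto
    then show "\<bar>a + (\<Sum>j<k. c j * indicator (E j) x)\<bar> \<le> M"
      using Suc.prems(2) by (auto simp: algebra_simps)
  qed
  have Ej: "\<forall>j<k. E j \<in> A" using Suc.prems by auto
  obtain P1 N1 where PN1: "P1 \<in> A" "N1 \<in> A" "P1 \<subseteq> D1" "N1 \<subseteq> D1"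
    "(a + c k) * \<mu> D1 + (\<Sum>j<k. c j * \<mu> (E j \<inter> D1)) \<le> M * (\<mu> P1 - \<mu> N1)"
    using Suc.IH[OF D1A h1 Ej] by blast
  obtain P2 N2 where PN2: "P2 \<in> A" "N2 \<in> A" "P2 \<subseteq> D2" "N2 \<subseteq> D2"
    "a * \<mu> D2 + (\<Sum>j<k. c j * \<mu> (E j \<inter> D2)) \<le> M * (\<mu> P2 - \<mu> N2)"
    using Suc.IH[OF D2A h2 Ej] by blast
  have dis: "D1 \<inter> D2 = {}" unfolding D1_def D2_def by auto
  have uD: "D = D1 \<union> D2" unfolding D1_def D2_def by auto
  have muD: "\<mu> D = \<mu> D1 + \<mu> D2" using add D1A D2A dis uD by auto
  have muEj: "\<mu> (E j \<inter> D) = \<mu> (E j \<inter> D1) + \<mu> (E j \<inter> D2)" if "j < k" for j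
  proof -
    have "E j \<inter> D = (E j \<inter> D1) \<union> (E j \<inter> D2)" using uD by auto
    moreover have "E j \<inter> D1 \<in> A" "E j \<inter> D2 \<in> A" using alg_facts(3)[OF alg] Ej that D1A D2A by auto
    moreover have "(E j \<inter> D1) \<inter> (E j \<inter> D2) = {}" using dis by auto
    ultimately show ?thesis using add by metis
  qed
  have EkD: "E k \<inter> D = D1" unfolding D1_def by auto
  have sumsplit: "(\<Sum>j<k. c j * \<mu> (E j \<inter> D)) = (\<Sum>j<k. c j * \<mu> (E j \<inter> D1)) + (\<Sum>j<k. c j * \<mu> (E j \<inter> D2))"
    by (simp add: muEj distrib_left sum.distrib)
  have muP: "\<mu> (P1 \<union> P2) = \<mu> P1 + \<mu> P2" using add PN1 PN2 dis by blast
  have muN: "\<mu> (N1 \<union> N2) = \<mu> N1 + \<mu> N2" using add PN1 PN2 dis by blast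
  have "a * \<mu> D + (\<Sum>j<Suc k. c j * \<mu> (E j \<inter> D)) =
      ((a + c k) * \<mu> D1 + (\<Sum>j<k. c j * \<mu> (E j \<inter> D1))) + (a * \<mu> D2 + (\<Sum>j<k. c j * \<mu> (E j \<inter> D2)))"
    by (simp add: muD sumsplit EkD algebra_simps)
  also have "\<dots> \<le> M * (\<mu> (P1 \<union> P2) - \<mu> (N1 \<union> N2))"
    using PN1(5) PN2(5) by (simp add: muP muN algebra_simps)
  finally show ?case using PN1 PN2 alg_facts(4)[OF alg] uD by (intro exI[of _ "P1 \<union> P2"] exI[of _ "N1 \<union> N2"]) auto
qed



lemma ba_vals:
  assumes "\<mu> \<in> ba \<Omega> A"
  shows "\<And>E. E \<notin> A \<Longrightarrow> \<mu> E = 0"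
    and "\<forall>E\<in>A. \<forall>F\<in>A. E \<inter> F = {} \<longrightarrow> \<mu> (E \<union> F) = \<mu> E + \<mu> F"
    and "\<exists>c. \<forall>E\<in>A. \<bar>\<mu> E\<bar> \<le> c"
  using assms unfolding ba_def by auto

lemma rep_bound1:
  fixes k :: nat and \<mu> :: "'w set \<Rightarrow> real"
  assumes alg: "algebra \<Omega> A" and mu: "\<mu> \<in> ba \<Omega> A" and C: "\<forall>E\<in>A. \<bar>\<mu> E\<bar> \<le> C"
    and E: "\<forall>j<k. E j \<in> A" and M: "M \<ge> 0"
    and b: "\<forall>x\<in>\<Omega>. \<bar>(\<Sum>j<k. c j * indicator (E j) x)\<bar> \<le> M"
  shows "(\<Sum>j<k. c j * \<mu> (E j)) \<le> 2 * C * M"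
proof -
  obtain P N where PN: "P \<in> A" "N \<in> A"
    "0 * \<mu> \<Omega> + (\<Sum>j<k. c j * \<mu> (E j \<inter> \<Omega>)) \<le> M * (\<mu> P - \<mu> N)"
    using pn_bound[OF alg ba_vals(2)[OF mu] E alg_facts(2)[OF alg], of 0 c M] b by auto
  have "E j \<inter> \<Omega> = E j" if "j < k" for j using E that alg_facts(6)[OF alg] by blast
  then have "(\<Sum>j<k. c j * \<mu> (E j \<inter> \<Omega>)) = (\<Sum>j<k. c j * \<mu> (E j))" by (intro sum.cong) auto
  moreover have "M * (\<mu> P - \<mu> N) \<le> M * (2 * C)"
  proof -
    have "\<mu> P \<le> C" "- \<mu> N \<le> C" using C PN(1,2) by (auto simp: abs_le_iff)
    then show ?thesis using M by (intro mult_left_mono) auto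
  qed
  ultimately show ?thesis using PN(3) by (simp add: algebra_simps)
qed

lemma rep_bound:
  fixes k :: nat and \<mu> :: "'w set \<Rightarrow> real"
  assumes alg: "algebra \<Omega> A" and mu: "\<mu> \<in> ba \<Omega> A" and C: "\<forall>E\<in>A. \<bar>\<mu> E\<bar> \<le> C"
    and E: "\<forall>j<k. E j \<in> A" and M: "M \<ge> 0"
    and b: "\<forall>x\<in>\<Omega>. \<bar>(\<Sum>j<k. c j * indicator (E j) x)\<bar> \<le> M"
  shows "\<bar>\<Sum>j<k. c j * \<mu> (E j)\<bar> \<le> 2 * C * M"
proof -
  have 1: "(\<Sum>j<k. c j * \<mu> (E j)) \<le> 2 * C * M" by (rule rep_bound1[OF assms])
  have b2: "\<forall>x\<in>\<Omega>. \<bar>(\<Sum>j<k. (- c j) * indicator (E j) x)\<bar> \<le> M"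
    using b by (simp add: sum_negf)
  have "(\<Sum>j<k. (- c j) * \<mu> (E j)) \<le> 2 * C * M" by (rule rep_bound1[OF alg mu C E M b2])
  then show ?thesis using 1 by (simp add: sum_negf)
qed

lemma sum_concat: "(\<Sum>j<k+k'. f j) = (\<Sum>j<k. f j) + (\<Sum>j<k'. f (k+j))" for f :: "nat \<Rightarrow> real"
  by (induct k') (simp_all add: lessThan_Suc)

lemma rep_diff:
  fixes k k' :: nat and c c' :: "nat \<Rightarrow> real"
  assumes "\<forall>j<k. E j \<in> A" "\<forall>j<k'. E' j \<in> A"
  shows "\<exists>(k''::nat) (c''::nat \<Rightarrow> real) E''. (\<forall>j<k''. E'' j \<in> A) \<and>
    (\<forall>g. (\<Sum>j<k. c j * g (E j)) - (\<Sum>j<k'. c' j * g (E' j)) = (\<Sum>j<k''. c'' j * g (E'' j)))"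
proof -
  define c'' where "c'' = (\<lambda>j. if j < k then c j else - c' (j - k))"
  define E'' where "E'' = (\<lambda>j. if j < k then E j else E' (j - k))"
  have 1: "\<forall>j<k+k'. E'' j \<in> A" using assms unfolding E''_def by auto
  have 2: "(\<Sum>j<k. c j * g (E j)) - (\<Sum>j<k'. c' j * g (E' j)) = (\<Sum>j<k+k'. c'' j * g (E'' j))" for g
  proof -
    have "(\<Sum>j<k+k'. c'' j * g (E'' j)) = (\<Sum>j<k. c'' j * g (E'' j)) + (\<Sum>j<k'. c'' (k+j) * g (E'' (k+j)))"
      by (rule sum_concat)
    also have "(\<Sum>j<k. c'' j * g (E'' j)) = (\<Sum>j<k. c j * g (E j))"
      unfolding c''_def E''_def by (intro sum.cong) auto
    also have "(\<Sum>j<k'. c'' (k+j) * g (E'' (k+j))) = - (\<Sum>j<k'. c' j * g (E' j))"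
      unfolding c''_def E''_def by (simp add: sum_negf)
    finally show ?thesis by simp
  qed
  show ?thesis using 1 2 by blast
qed

lemma ba_bound_nonneg:
  assumes alg: "algebra \<Omega> A" and C: "\<forall>E\<in>A. \<bar>\<mu> E\<bar> \<le> (C::real)"
  shows "0 \<le> C"
  using C alg_facts(1)[OF alg] by force

lemma SI_eq:
  fixes k :: nat and \<mu> :: "'w set \<Rightarrow> real"
  assumes alg: "algebra \<Omega> A" and mu: "\<mu> \<in> ba \<Omega> A"
    and E: "\<forall>j<k. E j \<in> A" and s: "\<forall>x\<in>\<Omega>. s x = (\<Sum>j<k. c j * indicator (E j) x)"
  shows "simple_integral \<Omega> A \<mu> s = (\<Sum>j<k. c j * \<mu> (E j))"
  unfolding simple_integral_def
proof (rule the_equality)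
  show "\<exists>(k'::nat) c' E'. (\<forall>j<k'. E' j \<in> A) \<and> (\<forall>x\<in>\<Omega>. s x = (\<Sum>j<k'. c' j * indicator (E' j) x))
      \<and> (\<Sum>j<k. c j * \<mu> (E j)) = (\<Sum>j<k'. c' j * \<mu> (E' j))"
    using E s by blast
next
  fix r assume "\<exists>(k'::nat) c' E'. (\<forall>j<k'. E' j \<in> A) \<and> (\<forall>x\<in>\<Omega>. s x = (\<Sum>j<k'. c' j * indicator (E' j) x))
      \<and> r = (\<Sum>j<k'. c' j * \<mu> (E' j))"
  then obtain k' :: nat and c' E' where E': "\<forall>j<k'. E' j \<in> A"
    and s': "\<forall>x\<in>\<Omega>. s x = (\<Sum>j<k'. c' j * indicator (E' j) x)" and r: "r = (\<Sum>j<k'. c' j * \<mu> (E' j))"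
    by blast
  obtain k'' :: nat and c'' :: "nat \<Rightarrow> real" and E'' where E'': "\<forall>j<k''. E'' j \<in> A" and g:
    "\<forall>g. (\<Sum>j<k. c j * g (E j)) - (\<Sum>j<k'. c' j * g (E' j)) = (\<Sum>j<k''. c'' j * g (E'' j))"
    using rep_diff[OF E E', of c c'] by blast
  obtain C where C: "\<forall>E\<in>A. \<bar>\<mu> E\<bar> \<le> C" using ba_vals(3)[OF mu] by blast
  have "\<forall>x\<in>\<Omega>. \<bar>(\<Sum>j<k''. c'' j * indicator (E'' j) x)\<bar> \<le> 0"
  proof
    fix x assume x: "x \<in> \<Omega>"
    have "(\<Sum>j<k''. c'' j * indicator (E'' j) x) = s x - s x"
      using g[rule_format, of "\<lambda>X. indicator X x"] s s' x by simp
    then show "\<bar>(\<Sum>j<k''. c'' j * indicator (E'' j) x)\<bar> \<le> 0" by simp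
  qed
  then have "\<bar>\<Sum>j<k''. c'' j * \<mu> (E'' j)\<bar> \<le> 2 * C * 0"
    by (intro rep_bound[OF alg mu C E'']) auto
  then show "r = (\<Sum>j<k. c j * \<mu> (E j))" using g[rule_format, of \<mu>] r by simp
qed

lemma SI_diff:
  fixes \<mu> :: "'w set \<Rightarrow> real"
  assumes alg: "algebra \<Omega> A" and mu: "\<mu> \<in> ba \<Omega> A" and C: "\<forall>E\<in>A. \<bar>\<mu> E\<bar> \<le> C"
    and s: "s \<in> simple_funs \<Omega> A" and s': "s' \<in> simple_funs \<Omega> A" and M: "M \<ge> 0"
    and b: "\<forall>x\<in>\<Omega>. \<bar>s x - s' x\<bar> \<le> M"
  shows "\<bar>simple_integral \<Omega> A \<mu> s - simple_integral \<Omega> A \<mu> s'\<bar> \<le> 2 * C * M"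
proof -
  obtain k :: nat and c E where E: "\<forall>j<k. E j \<in> A" and sr: "\<forall>x\<in>\<Omega>. s x = (\<Sum>j<k. c j * indicator (E j) x)"
    using s unfolding simple_funs_def by blast
  obtain k' :: nat and c' E' where E': "\<forall>j<k'. E' j \<in> A" and sr': "\<forall>x\<in>\<Omega>. s' x = (\<Sum>j<k'. c' j * indicator (E' j) x)"
    using s' unfolding simple_funs_def by blast
  obtain k'' :: nat and c'' :: "nat \<Rightarrow> real" and E'' where E'': "\<forall>j<k''. E'' j \<in> A" and g:
    "\<forall>g. (\<Sum>j<k. c j * g (E j)) - (\<Sum>j<k'. c' j * g (E' j)) = (\<Sum>j<k''. c'' j * g (E'' j))"
    using rep_diff[OF E E', of c c'] by blast
  have "\<forall>x\<in>\<Omega>. \<bar>(\<Sum>j<k''. c'' j * indicator (E'' j) x)\<bar> \<le> M"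
  proof
    fix x assume x: "x \<in> \<Omega>"
    have "(\<Sum>j<k''. c'' j * indicator (E'' j) x) = s x - s' x"
      using g[rule_format, of "\<lambda>X. indicator X x"] sr sr' x by simp
    then show "\<bar>(\<Sum>j<k''. c'' j * indicator (E'' j) x)\<bar> \<le> M" using b x by simp
  qed
  then have "\<bar>\<Sum>j<k''. c'' j * \<mu> (E'' j)\<bar> \<le> 2 * C * M"
    by (intro rep_bound[OF alg mu C E'' M])
  then show ?thesis using g[rule_format, of \<mu>] SI_eq[OF alg mu E sr] SI_eq[OF alg mu E' sr'] by simp
qed



lemma eq_of_small: "(\<And>e. e > 0 \<Longrightarrow> \<bar>x - y\<bar> < 2 * e) \<Longrightarrow> x = (y::real)"
proof (rule ccontr)
  assume h: "\<And>e. e > 0 \<Longrightarrow> \<bar>x - y\<bar> < 2 * e" and "x \<noteq> y"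
  then have "\<bar>x - y\<bar> > 0" by simp
  from h[OF half_gt_zero[OF this]] show False by simp
qed

lemma CI_prop:
  fixes \<mu> :: "'w set \<Rightarrow> real"
  assumes alg: "algebra \<Omega> A" and mu: "\<mu> \<in> ba \<Omega> A" and C: "\<forall>E\<in>A. \<bar>\<mu> E\<bar> \<le> C"
    and f: "f \<in> Bfun \<Omega> A"
  shows "\<forall>s\<in>simple_funs \<Omega> A. \<forall>M\<ge>0. (\<forall>x\<in>\<Omega>. \<bar>f x - s x\<bar> \<le> M) \<longrightarrow>
     \<bar>charge_integral \<Omega> A \<mu> f - simple_integral \<Omega> A \<mu> s\<bar> \<le> 2 * C * M"
proof -
  have C0: "0 \<le> C" using ba_bound_nonneg[OF alg C] .
  have "\<forall>n. \<exists>s\<in>simple_funs \<Omega> A. \<forall>x\<in>\<Omega>. \<bar>f x - s x\<bar> < inverse (real (Suc n))"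
    using f unfolding Bfun_def by auto
  then obtain sq where sq: "\<And>n. sq n \<in> simple_funs \<Omega> A"
    "\<And>n x. x \<in> \<Omega> \<Longrightarrow> \<bar>f x - sq n x\<bar> < inverse (real (Suc n))"
    by metis
  define a where "a n = simple_integral \<Omega> A \<mu> (sq n)" for n
  have key: "\<bar>simple_integral \<Omega> A \<mu> s - a n\<bar> \<le> 2 * C * (M + inverse (real (Suc n)))"
    if s: "s \<in> simple_funs \<Omega> A" and M: "M \<ge> 0" and b: "\<forall>x\<in>\<Omega>. \<bar>f x - s x\<bar> \<le> M" for s M n
  proof -
    have "\<forall>x\<in>\<Omega>. \<bar>s x - sq n x\<bar> \<le> M + inverse (real (Suc n))"
    proof
      fix x assume x: "x \<in> \<Omega>"
      have "\<bar>s x - sq n x\<bar> \<le> \<bar>f x - s x\<bar> + \<bar>f x - sq n x\<bar>" by simp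
      then show "\<bar>s x - sq n x\<bar> \<le> M + inverse (real (Suc n))" using b sq(2)[OF x, of n] x by fastforce
    qed
    then show ?thesis unfolding a_def
      by (intro SI_diff[OF alg mu C s sq(1)]) (auto simp: M)
  qed
  have "Cauchy a"
  proof (rule metric_CauchyI)
    fix e :: real assume e: "e > 0"
    obtain N where N: "inverse (real (Suc N)) < e / (4 * C + 1)"
      using reals_Archimedean e C0 by (metis divide_pos_pos add_nonneg_pos mult_nonneg_nonneg zero_less_one zero_le_numeral)
    show "\<exists>N. \<forall>m\<ge>N. \<forall>n\<ge>N. dist (a m) (a n) < e"
    proof (intro exI allI impI)
      fix m n assume m: "m \<ge> N" and n: "n \<ge> N"
      have im: "inverse (real (Suc m)) \<le> inverse (real (Suc N))" using m by (simp add: field_simps)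
      have inn: "inverse (real (Suc n)) \<le> inverse (real (Suc N))" using n by (simp add: field_simps)
      have "\<forall>x\<in>\<Omega>. \<bar>f x - sq m x\<bar> \<le> inverse (real (Suc m))" using sq(2) by (simp add: less_imp_le)
      then have "\<bar>a m - a n\<bar> \<le> 2 * C * (inverse (real (Suc m)) + inverse (real (Suc n)))"
        using key[of "sq m" "inverse (real (Suc m))" n] sq(1)[of m] unfolding a_def by simp
      also have "\<dots> \<le> 2 * C * (2 * inverse (real (Suc N)))"
      proof -
        have "inverse (real (Suc m)) + inverse (real (Suc n)) \<le> 2 * inverse (real (Suc N))"
          using im inn by linarith
        then show ?thesis using C0 by (intro mult_left_mono) auto
      qed
      also have "\<dots> = (4 * C) * inverse (real (Suc N))" by simp
      also have "\<dots> \<le> 4 * C * (e / (4 * C + 1))" using N C0 by (intro mult_left_mono) auto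
      also have "\<dots> < e" using e C0 by (simp add: field_simps)
      finally show "dist (a m) (a n) < e" by (simp add: dist_real_def)
    qed
  qed
  then obtain r where r: "a \<longlonglongrightarrow> r" using Cauchy_convergent_iff convergent_def by blast
  have bnd: "\<bar>simple_integral \<Omega> A \<mu> s - r\<bar> \<le> 2 * C * M"
    if s: "s \<in> simple_funs \<Omega> A" and M: "M \<ge> 0" and b: "\<forall>x\<in>\<Omega>. \<bar>f x - s x\<bar> \<le> M" for s M
  proof -
    have l1: "(\<lambda>n. \<bar>simple_integral \<Omega> A \<mu> s - a n\<bar>) \<longlonglongrightarrow> \<bar>simple_integral \<Omega> A \<mu> s - r\<bar>"
      by (intro tendsto_intros r)
    have l2: "(\<lambda>n. 2 * C * (M + inverse (real (Suc n)))) \<longlonglongrightarrow> 2 * C * (M + 0)"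
      by (intro tendsto_intros LIMSEQ_inverse_real_of_nat)
    show ?thesis using LIMSEQ_le[OF l1 l2] key[OF s M b] by simp
  qed
  have ci: "charge_integral \<Omega> A \<mu> f = r"
    unfolding charge_integral_def
  proof (rule the_equality)
    show "\<forall>\<epsilon>>0. \<exists>\<delta>>0. \<forall>s\<in>simple_funs \<Omega> A. (\<forall>x\<in>\<Omega>. \<bar>f x - s x\<bar> < \<delta>) \<longrightarrow> \<bar>simple_integral \<Omega> A \<mu> s - r\<bar> < \<epsilon>"
    proof (intro allI impI)
      fix \<epsilon> :: real assume e: "\<epsilon> > 0"
      show "\<exists>\<delta>>0. \<forall>s\<in>simple_funs \<Omega> A. (\<forall>x\<in>\<Omega>. \<bar>f x - s x\<bar> < \<delta>) \<longrightarrow> \<bar>simple_integral \<Omega> A \<mu> s - r\<bar> < \<epsilon>"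
      proof (intro exI conjI ballI impI)
        show "\<epsilon> / (2 * C + 1) > 0" using e C0 by simp
        fix s assume s: "s \<in> simple_funs \<Omega> A" and b: "\<forall>x\<in>\<Omega>. \<bar>f x - s x\<bar> < \<epsilon> / (2 * C + 1)"
        have "\<bar>simple_integral \<Omega> A \<mu> s - r\<bar> \<le> 2 * C * (\<epsilon> / (2 * C + 1))"
          using b e C0 by (intro bnd[OF s]) (auto simp: less_imp_le)
        also have "\<dots> < \<epsilon>" using e C0 by (simp add: field_simps)
        finally show "\<bar>simple_integral \<Omega> A \<mu> s - r\<bar> < \<epsilon>" .
      qed
    qed
  next
    fix r' assume h: "\<forall>\<epsilon>>0. \<exists>\<delta>>0. \<forall>s\<in>simple_funs \<Omega> A. (\<forall>x\<in>\<Omega>. \<bar>f x - s x\<bar> < \<delta>) \<longrightarrow> \<bar>simple_integral \<Omega> A \<mu> s - r'\<bar> < \<epsilon>"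
    show "r' = r"
    proof (rule eq_of_small)
      fix e :: real assume e: "e > 0"
      obtain \<delta> where d: "\<delta> > 0" and hd: "\<forall>s\<in>simple_funs \<Omega> A. (\<forall>x\<in>\<Omega>. \<bar>f x - s x\<bar> < \<delta>) \<longrightarrow> \<bar>simple_integral \<Omega> A \<mu> s - r'\<bar> < e"
        using h e by blast
      have "min \<delta> (e / (2 * C + 1)) > 0" using d e C0 by simp
      then obtain s where s: "s \<in> simple_funs \<Omega> A" and bs: "\<forall>x\<in>\<Omega>. \<bar>f x - s x\<bar> < min \<delta> (e / (2 * C + 1))"
        using f unfolding Bfun_def by blast
      have 1: "\<bar>simple_integral \<Omega> A \<mu> s - r'\<bar> < e" using hd s bs by auto
      have "\<bar>simple_integral \<Omega> A \<mu> s - r\<bar> \<le> 2 * C * (e / (2 * C + 1))"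
        using bs e C0 by (intro bnd[OF s]) (auto simp: less_imp_le)
      also have "\<dots> < e" using e C0 by (simp add: field_simps)
      finally show "\<bar>r' - r\<bar> < 2 * e" using 1 by linarith
    qed
  qed
  show ?thesis using bnd ci by (simp add: abs_minus_commute)
qed

lemma indicator_simple2:
    "\<forall>x\<in>\<Omega>. indicator G x = (\<Sum>j<(1::nat). (\<lambda>_. 1::real) j * indicator ((\<lambda>_. G) j) x)"
  by simp

lemma indicator_simple:
  assumes "G \<in> A"
  shows "indicator G \<in> simple_funs \<Omega> A"
  unfolding simple_funs_def
  by (intro CollectI exI[of _ "1::nat"] exI[of _ "\<lambda>_. 1::real"] exI[of _ "\<lambda>_. G"]) (use assms in auto)

lemma simple_Bfun: "s \<in> simple_funs \<Omega> A \<Longrightarrow> s \<in> Bfun \<Omega> A"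
  unfolding Bfun_def by force

lemma CI_indicator:
  fixes \<mu> :: "'w set \<Rightarrow> real"
  assumes alg: "algebra \<Omega> A" and mu: "\<mu> \<in> ba \<Omega> A" and G: "G \<in> A"
  shows "charge_integral \<Omega> A \<mu> (indicator G) = \<mu> G"
proof -
  obtain C where C: "\<forall>E\<in>A. \<bar>\<mu> E\<bar> \<le> C" using ba_vals(3)[OF mu] by blast
  have h: "\<forall>s\<in>simple_funs \<Omega> A. \<forall>M\<ge>0. (\<forall>x\<in>\<Omega>. \<bar>indicator G x - s x\<bar> \<le> M) \<longrightarrow>
     \<bar>charge_integral \<Omega> A \<mu> (indicator G) - simple_integral \<Omega> A \<mu> s\<bar> \<le> 2 * C * M"
    by (rule CI_prop[OF alg mu C simple_Bfun[OF indicator_simple[OF G]]])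
  have "\<bar>charge_integral \<Omega> A \<mu> (indicator G) - simple_integral \<Omega> A \<mu> (indicator G)\<bar> \<le> 2 * C * 0"
    using h[rule_format, OF indicator_simple[OF G], of 0] by simp
  moreover have "simple_integral \<Omega> A \<mu> (indicator G) = (\<Sum>j<(1::nat). (\<lambda>_. 1::real) j * \<mu> ((\<lambda>_. G) j))"
    by (rule SI_eq[OF alg mu _ indicator_simple2]) (use G in auto)
  ultimately show ?thesis by simp
qed



lemma zero_simple: "(\<lambda>_. 0::real) \<in> simple_funs \<Omega> A"
  unfolding simple_funs_def by (intro CollectI exI[of _ "0::nat"]) auto

lemma sub_mem: "f \<in> Bfun \<Omega> A \<Longrightarrow> open U \<Longrightarrow>
  {\<mu> \<in> ba \<Omega> A. charge_integral \<Omega> A \<mu> f \<in> U} \<in> {{\<mu> \<in> ba \<Omega> A. charge_integral \<Omega> A \<mu> f \<in> U} | f U. f \<in> Bfun \<Omega> A \<and> open U}"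
  by (rule CollectI, rule exI[of _ f], rule exI[of _ U], intro conjI refl)

lemma ba_in_sub:
  "ba \<Omega> A \<in> {{\<mu> \<in> ba \<Omega> A. charge_integral \<Omega> A \<mu> f \<in> U} | f U. f \<in> Bfun \<Omega> A \<and> open U}"
proof -
  have "ba \<Omega> A = {\<mu> \<in> ba \<Omega> A. charge_integral \<Omega> A \<mu> (\<lambda>_. 0) \<in> UNIV}" by simp
  then show ?thesis using simple_Bfun[OF zero_simple] open_UNIV by blast
qed

lemma topspace_wstar: "topspace (wstar_top \<Omega> A) = ba \<Omega> A"
  unfolding wstar_top_def topology_generated_by_topspace
  using ba_in_sub[of \<Omega> A] by blast

lemma closure_approx:
  assumes alg: "algebra \<Omega> A" and mu: "\<mu> \<in> wstar_top \<Omega> A closure_of X"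
  shows "\<mu> \<in> ba \<Omega> A"
    and "\<And>\<G> \<epsilon>. finite \<G> \<Longrightarrow> \<G> \<subseteq> A \<Longrightarrow> \<epsilon> > 0 \<Longrightarrow> \<exists>\<nu>\<in>X. \<nu> \<in> ba \<Omega> A \<and> (\<forall>G\<in>\<G>. \<bar>\<nu> G - \<mu> G\<bar> < \<epsilon>)"
proof -
  have "\<mu> \<in> topspace (wstar_top \<Omega> A)" using mu unfolding in_closure_of by blast
  then show muba: "\<mu> \<in> ba \<Omega> A" using topspace_wstar by blast
  fix \<G> \<epsilon> assume G: "finite \<G>" "\<G> \<subseteq> A" and e: "(\<epsilon>::real) > 0"
  define B where "B = {{\<mu> \<in> ba \<Omega> A. charge_integral \<Omega> A \<mu> f \<in> U} | f U. f \<in> Bfun \<Omega> A \<and> open U}"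
  define F where "F = insert (ba \<Omega> A) ((\<lambda>G. {\<nu> \<in> ba \<Omega> A. charge_integral \<Omega> A \<nu> (indicator G) \<in> ball (\<mu> G) \<epsilon>}) ` \<G>)"
  have "generate_topology_on B (\<Inter>F)"
  proof (rule generate_topology_on_Inter)
    show "finite F" "F \<noteq> {}" unfolding F_def using G by auto
    fix K assume "K \<in> F"
    then show "generate_topology_on B K"
    proof (cases "K = ba \<Omega> A")
      case True
      have "K \<in> B" unfolding B_def True by (rule ba_in_sub)
      then show ?thesis by (rule generate_topology_on.Basis)
    next
      case False
      then obtain G0 where "G0 \<in> \<G>" "K = {\<nu> \<in> ba \<Omega> A. charge_integral \<Omega> A \<nu> (indicator G0) \<in> ball (\<mu> G0) \<epsilon>}"
        using \<open>K \<in> F\<close> unfolding F_def by auto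
      then have "K \<in> B" unfolding B_def using G simple_Bfun[OF indicator_simple, of G0 A \<Omega>]
        sub_mem[of "indicator G0" \<Omega> A "ball (\<mu> G0) \<epsilon>"] by auto
      then show ?thesis by (rule generate_topology_on.Basis)
    qed
  qed
  then have op: "openin (wstar_top \<Omega> A) (\<Inter>F)"
    unfolding wstar_top_def B_def openin_topology_generated_by_iff by simp
  have "\<mu> \<in> \<Inter>F"
  proof -
    have "\<mu> \<in> {\<nu> \<in> ba \<Omega> A. charge_integral \<Omega> A \<nu> (indicator G) \<in> ball (\<mu> G) \<epsilon>}" if "G \<in> \<G>" for G
      using muba CI_indicator[OF alg muba, of G] that G e by auto
    then show ?thesis unfolding F_def using muba by blast
  qed
  then obtain y where y: "y \<in> X" "y \<in> \<Inter>F" using mu op unfolding in_closure_of by blast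
  have yba: "y \<in> ba \<Omega> A" using y unfolding F_def by auto
  have "\<forall>G\<in>\<G>. \<bar>y G - \<mu> G\<bar> < \<epsilon>"
  proof
    fix G assume "G \<in> \<G>"
    then have "charge_integral \<Omega> A y (indicator G) \<in> ball (\<mu> G) \<epsilon>" "G \<in> A"
      using y G unfolding F_def by auto
    then show "\<bar>y G - \<mu> G\<bar> < \<epsilon>" using CI_indicator[OF alg yba] by (simp add: dist_real_def abs_minus_commute)
  qed
  then show "\<exists>\<nu>\<in>X. \<nu> \<in> ba \<Omega> A \<and> (\<forall>G\<in>\<G>. \<bar>\<nu> G - \<mu> G\<bar> < \<epsilon>)" using y yba by blast
qed

definition nbh :: "'w set \<Rightarrow> 'w set set \<Rightarrow> ('w set \<Rightarrow> real) \<Rightarrow> ('w set \<Rightarrow> real) set \<Rightarrow> bool" where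
  "nbh \<Omega> A \<mu> T \<longleftrightarrow> (\<exists>\<G> \<epsilon>. finite \<G> \<and> \<G> \<subseteq> A \<and> \<epsilon> > 0 \<and>
      (\<forall>\<nu>\<in>pba \<Omega> A. (\<forall>G\<in>\<G>. \<bar>\<nu> G - \<mu> G\<bar> < \<epsilon>) \<longrightarrow> \<nu> \<in> T))"

lemma nbhI: "finite \<G> \<Longrightarrow> \<G> \<subseteq> A \<Longrightarrow> \<epsilon> > 0 \<Longrightarrow>
   (\<And>\<nu>. \<nu> \<in> pba \<Omega> A \<Longrightarrow> (\<forall>G\<in>\<G>. \<bar>\<nu> G - \<mu> G\<bar> < \<epsilon>) \<Longrightarrow> \<nu> \<in> T) \<Longrightarrow> nbh \<Omega> A \<mu> T"
  unfolding nbh_def by blast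

lemma nbh_mono: "nbh \<Omega> A \<mu> T \<Longrightarrow> T \<subseteq> T' \<Longrightarrow> nbh \<Omega> A \<mu> T'"
  unfolding nbh_def by blast

lemma nbh_Int:
  assumes "nbh \<Omega> A \<mu> T1" "nbh \<Omega> A \<mu> T2"
  shows "nbh \<Omega> A \<mu> (T1 \<inter> T2)"
proof -
  obtain G1 e1 where 1: "finite G1" "G1 \<subseteq> A" "e1 > 0" "\<forall>\<nu>\<in>pba \<Omega> A. (\<forall>G\<in>G1. \<bar>\<nu> G - \<mu> G\<bar> < e1) \<longrightarrow> \<nu> \<in> T1"
    using assms(1) unfolding nbh_def by blast
  obtain G2 e2 where 2: "finite G2" "G2 \<subseteq> A" "e2 > 0" "\<forall>\<nu>\<in>pba \<Omega> A. (\<forall>G\<in>G2. \<bar>\<nu> G - \<mu> G\<bar> < e2) \<longrightarrow> \<nu> \<in> T2"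
    using assms(2) unfolding nbh_def by blast
  show ?thesis
  proof (rule nbhI[of "G1 \<union> G2" A "min e1 e2"])
    show "finite (G1 \<union> G2)" "G1 \<union> G2 \<subseteq> A" "min e1 e2 > 0" using 1 2 by auto
    fix \<nu> assume nu: "\<nu> \<in> pba \<Omega> A" and h: "\<forall>G\<in>G1 \<union> G2. \<bar>\<nu> G - \<mu> G\<bar> < min e1 e2"
    have "\<forall>G\<in>G1. \<bar>\<nu> G - \<mu> G\<bar> < e1" using h by simp
    then have "\<nu> \<in> T1" using 1(4) nu by blast
    moreover have "\<forall>G\<in>G2. \<bar>\<nu> G - \<mu> G\<bar> < e2" using h by simp
    then have "\<nu> \<in> T2" using 2(4) nu by blast
    ultimately show "\<nu> \<in> T1 \<inter> T2" by blast
  qed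
qed

lemma nbh_basis:
  assumes alg: "algebra \<Omega> A" and f: "f \<in> Bfun \<Omega> A" and U: "open U"
    and mu: "\<mu> \<in> pba \<Omega> A" and cm: "charge_integral \<Omega> A \<mu> f \<in> U"
  shows "nbh \<Omega> A \<mu> {\<mu> \<in> ba \<Omega> A. charge_integral \<Omega> A \<mu> f \<in> U}"
proof -
  obtain \<eta> where eta: "\<eta> > 0" "ball (charge_integral \<Omega> A \<mu> f) \<eta> \<subseteq> U" using openE[OF U cm] by blast
  have "\<eta> / 8 > 0" using eta by simp
  then have "\<exists>s0\<in>simple_funs \<Omega> A. \<forall>x\<in>\<Omega>. \<bar>f x - s0 x\<bar> < \<eta> / 8"
    using f unfolding Bfun_def by blast
  then obtain s0 where s0: "s0 \<in> simple_funs \<Omega> A" "\<forall>x\<in>\<Omega>. \<bar>f x - s0 x\<bar> < \<eta> / 8"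
    by blast
  then obtain k :: nat and c E where E: "\<forall>j<k. E j \<in> A" and sr: "\<forall>x\<in>\<Omega>. s0 x = (\<Sum>j<k. c j * indicator (E j) x)"
    unfolding simple_funs_def by blast
  define S where "S = (\<Sum>j<k. \<bar>c j\<bar>)"
  have S0: "S \<ge> 0" unfolding S_def by (simp add: sum_nonneg)
  define \<epsilon> where "\<epsilon> = \<eta> / (4 * (S + 1))"
  have e0: "\<epsilon> > 0" unfolding \<epsilon>_def using eta S0 by simp
  have le8: "\<forall>x\<in>\<Omega>. \<bar>f x - s0 x\<bar> \<le> \<eta> / 8"
  proof
    fix x assume x: "x \<in> \<Omega>"
    show "\<bar>f x - s0 x\<bar> \<le> \<eta> / 8" using less_imp_le[OF s0(2)[rule_format, OF x]] .
  qed
  have e8: "\<eta> / 8 \<ge> 0" using eta by simp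
  have bnd: "\<bar>charge_integral \<Omega> A \<nu> f - (\<Sum>j<k. c j * \<nu> (E j))\<bar> \<le> \<eta> / 4" if nu: "\<nu> \<in> pba \<Omega> A" for \<nu>
  proof -
    have nb: "\<nu> \<in> ba \<Omega> A" by (rule pba_ba[OF alg nu])
    have C: "\<forall>E\<in>A. \<bar>\<nu> E\<bar> \<le> 1" using pba_abs_le1[OF alg nu] by blast
    have "\<bar>charge_integral \<Omega> A \<nu> f - simple_integral \<Omega> A \<nu> s0\<bar> \<le> 2 * 1 * (\<eta> / 8)"
      using CI_prop[OF alg nb C f] s0(1) e8 le8 by blast
    then show ?thesis using SI_eq[OF alg nb E sr] by simp
  qed
  show ?thesis
  proof (rule nbhI[of "E ` {..<k}" A \<epsilon>])
    show "finite (E ` {..<k})" by simp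
    show "E ` {..<k} \<subseteq> A" using E by auto
    show "\<epsilon> > 0" by (rule e0)
    fix \<nu> assume nu: "\<nu> \<in> pba \<Omega> A" and cl: "\<forall>G\<in>E ` {..<k}. \<bar>\<nu> G - \<mu> G\<bar> < \<epsilon>"
    have "\<bar>(\<Sum>j<k. c j * \<nu> (E j)) - (\<Sum>j<k. c j * \<mu> (E j))\<bar> = \<bar>\<Sum>j<k. c j * (\<nu> (E j) - \<mu> (E j))\<bar>"
      by (simp add: sum_subtractf right_diff_distrib)
    also have "\<dots> \<le> (\<Sum>j<k. \<bar>c j * (\<nu> (E j) - \<mu> (E j))\<bar>)" by (rule sum_abs)
    also have "\<dots> \<le> (\<Sum>j<k. \<bar>c j\<bar> * \<epsilon>)"
    proof (rule sum_mono)
      fix j assume "j \<in> {..<k}"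
      then have "\<bar>\<nu> (E j) - \<mu> (E j)\<bar> \<le> \<epsilon>" using cl by (auto intro: less_imp_le)
      then show "\<bar>c j * (\<nu> (E j) - \<mu> (E j))\<bar> \<le> \<bar>c j\<bar> * \<epsilon>" unfolding abs_mult
        by (intro mult_left_mono) auto
    qed
    also have "\<dots> = S * \<epsilon>" unfolding S_def by (simp add: sum_distrib_right)
    also have "\<dots> \<le> \<eta> / 4"
    proof -
      have "S * \<epsilon> = (\<eta> / 4) * (S / (S + 1))" unfolding \<epsilon>_def using S0 by (simp add: field_simps)
      also have "\<dots> \<le> (\<eta> / 4) * 1" using S0 eta by (intro mult_left_mono) auto
      finally show ?thesis by simp
    qed
    finally have mid: "\<bar>(\<Sum>j<k. c j * \<nu> (E j)) - (\<Sum>j<k. c j * \<mu> (E j))\<bar> \<le> \<eta> / 4" .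
    have "\<bar>charge_integral \<Omega> A \<nu> f - charge_integral \<Omega> A \<mu> f\<bar> < \<eta>"
      using bnd[OF nu] bnd[OF mu] mid eta by linarith
    then have "charge_integral \<Omega> A \<nu> f \<in> U" using eta(2) by (auto simp: dist_real_def abs_minus_commute)
    then show "\<nu> \<in> {\<mu> \<in> ba \<Omega> A. charge_integral \<Omega> A \<mu> f \<in> U}" using pba_ba[OF alg nu] by simp
  qed
qed

lemma B_cases:
  assumes "s \<in> {{\<mu> \<in> ba \<Omega> A. charge_integral \<Omega> A \<mu> f \<in> U} | f U. f \<in> Bfun \<Omega> A \<and> open U}"
  obtains f U where "s = {\<mu> \<in> ba \<Omega> A. charge_integral \<Omega> A \<mu> f \<in> U}" "f \<in> Bfun \<Omega> A" "open U"
  using assms by (elim CollectE exE conjE) (rule that)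

lemma approx_closure:
  assumes alg: "algebra \<Omega> A" and X: "X \<subseteq> pba \<Omega> A" and mu: "\<mu> \<in> pba \<Omega> A"
    and approx: "\<And>\<G> \<epsilon>. finite \<G> \<Longrightarrow> \<G> \<subseteq> A \<Longrightarrow> \<epsilon> > 0 \<Longrightarrow> \<exists>\<nu>\<in>X. \<forall>G\<in>\<G>. \<bar>\<nu> G - \<mu> G\<bar> < \<epsilon>"
  shows "\<mu> \<in> wstar_top \<Omega> A closure_of X"
proof -
  define B where "B = {{\<mu> \<in> ba \<Omega> A. charge_integral \<Omega> A \<mu> f \<in> U} | f U. f \<in> Bfun \<Omega> A \<and> open U}"
  have good: "\<forall>\<mu>\<in>T. \<mu> \<in> pba \<Omega> A \<longrightarrow> nbh \<Omega> A \<mu> T"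
    if "generate_topology_on B T" for T
    using that
  proof (induction rule: generate_topology_on.induct)
    case Empty
    then show ?case by simp
  next
    case (Int a b)
    then show ?case using nbh_Int by blast
  next
    case (UN K)
    show ?case
    proof (intro ballI impI)
      fix \<mu> assume m: "\<mu> \<in> \<Union>K" "\<mu> \<in> pba \<Omega> A"
      then obtain k where k: "k \<in> K" "\<mu> \<in> k" by blast
      have "nbh \<Omega> A \<mu> k" using UN.IH[OF k(1)] k(2) m(2) by blast
      then show "nbh \<Omega> A \<mu> (\<Union>K)" by (rule nbh_mono) (use k in blast)
    qed
  next
    case (Basis s)
    obtain f U where s: "s = {\<mu> \<in> ba \<Omega> A. charge_integral \<Omega> A \<mu> f \<in> U}" and f: "f \<in> Bfun \<Omega> A" and U: "open U"
      using Basis unfolding B_def by (rule B_cases)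
    show ?case
    proof (intro ballI impI)
      fix \<mu> assume m: "\<mu> \<in> s" "\<mu> \<in> pba \<Omega> A"
      then have cm: "charge_integral \<Omega> A \<mu> f \<in> U" unfolding s by simp
      show "nbh \<Omega> A \<mu> s" unfolding s by (rule nbh_basis[OF alg f U m(2) cm])
    qed
  qed
  show ?thesis unfolding in_closure_of
  proof (intro conjI allI impI)
    show "\<mu> \<in> topspace (wstar_top \<Omega> A)" unfolding topspace_wstar by (rule pba_ba[OF alg mu])
    fix T assume T: "\<mu> \<in> T \<and> openin (wstar_top \<Omega> A) T"
    have wt: "wstar_top \<Omega> A = topology (generate_topology_on B)" unfolding wstar_top_def B_def by (rule refl)
    have gT: "generate_topology_on B T" using T unfolding wt openin_topology_generated_by_iff by (rule conjunct2)
    have muT: "\<mu> \<in> T" using T by (rule conjunct1)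
    have "nbh \<Omega> A \<mu> T" using good[OF gT] muT mu by blast
    then obtain \<G> \<epsilon> where g: "finite \<G>" "\<G> \<subseteq> A" "\<epsilon> > 0" "\<forall>\<nu>\<in>pba \<Omega> A. (\<forall>G\<in>\<G>. \<bar>\<nu> G - \<mu> G\<bar> < \<epsilon>) \<longrightarrow> \<nu> \<in> T"
      unfolding nbh_def by blast
    obtain \<nu> where nu: "\<nu> \<in> X" "\<forall>G\<in>\<G>. \<bar>\<nu> G - \<mu> G\<bar> < \<epsilon>" using approx[OF g(1-3)] by blast
    have "\<nu> \<in> pba \<Omega> A" using X nu(1) by (rule subsetD)
    then have "\<nu> \<in> T" using g(4) nu(2) by blast
    then show "\<exists>y. y \<in> X \<and> y \<in> T" using nu(1) by blast
  qed
qed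

lemma conv_pba:
  assumes K: "K \<subseteq> pba \<Omega> A"
  shows "conv_sf K \<subseteq> pba \<Omega> A"
proof
  fix \<mu> assume "\<mu> \<in> conv_sf K"
  then obtain k :: nat and a p where h: "\<forall>j<k. 0 \<le> a j \<and> p j \<in> K" "(\<Sum>j<k. a j) = 1"
    "\<mu> = (\<lambda>E. \<Sum>j<k. a j * p j E)" unfolding conv_sf_def by blast
  have pj: "p j \<in> pba \<Omega> A" if "j < k" for j using h K that by auto
  show "\<mu> \<in> pba \<Omega> A" unfolding pba_def
  proof (intro CollectI conjI ballI allI impI)
    fix E assume "E \<notin> A" then show "\<mu> E = 0" using h(3) pba_vals(1)[OF pj] by simp
  next
    fix E F assume "E \<in> A" "F \<in> A" "E \<inter> F = {}"
    then show "\<mu> (E \<union> F) = \<mu> E + \<mu> F" using h(3) pba_vals(2)[OF pj]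
      by (simp add: sum.distrib[symmetric] distrib_left)
  next
    fix E assume "E \<in> A" then show "0 \<le> \<mu> E" using h(1,3) pba_vals(3)[OF pj]
      by (auto intro!: sum_nonneg mult_nonneg_nonneg)
  next
    show "\<mu> \<Omega> = 1" using h(2,3) pba_vals(4)[OF pj] by simp
  qed
qed

lemma closure_pba:
  assumes alg: "algebra \<Omega> A" and X: "X \<subseteq> pba \<Omega> A" and mu: "\<mu> \<in> wstar_top \<Omega> A closure_of X"
  shows "\<mu> \<in> pba \<Omega> A"
proof -
  have mb: "\<mu> \<in> ba \<Omega> A" by (rule closure_approx(1)[OF alg mu])
  have one: "\<exists>\<nu>\<in>X. \<bar>\<nu> G - \<mu> G\<bar> < e" if "G \<in> A" "e > 0" for G e
    using closure_approx(2)[OF alg mu, of "{G}" e] that by auto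
  have nn: "0 \<le> \<mu> G" if G: "G \<in> A" for G
  proof (rule ccontr)
    assume "\<not> 0 \<le> \<mu> G"
    then obtain \<nu> where "\<nu> \<in> X" "\<bar>\<nu> G - \<mu> G\<bar> < - \<mu> G" using one[OF G, of "- \<mu> G"] by auto
    moreover have "0 \<le> \<nu> G" using pba_vals(3)[of \<nu>] X G calculation(1) by blast
    ultimately show False by linarith
  qed
  have o: "\<mu> \<Omega> = 1"
  proof (rule eq_of_small)
    fix e :: real assume e: "e > 0"
    obtain \<nu> where "\<nu> \<in> X" "\<bar>\<nu> \<Omega> - \<mu> \<Omega>\<bar> < e" using one[OF alg_facts(2)[OF alg] e] by auto
    moreover have "\<nu> \<Omega> = 1" using pba_vals(4)[of \<nu>] X calculation(1) by blast
    ultimately show "\<bar>\<mu> \<Omega> - 1\<bar> < 2 * e" using e by linarith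
  qed
  show ?thesis using mb nn o unfolding ba_def pba_def by blast
qed

lemma conv_intro:
  fixes w :: "'v \<Rightarrow> real"
  assumes V: "finite V" "V \<noteq> {}" and w: "\<forall>v\<in>V. 0 \<le> w v" "(\<Sum>v\<in>V. w v) = 1" and p: "\<forall>v\<in>V. p v \<in> K"
  shows "(\<lambda>E. \<Sum>v\<in>V. w v * p v E) \<in> conv_sf K"
proof -
  obtain h where h: "bij_betw h {0..<card V} V" using ex_bij_betw_nat_finite[OF V(1)] by blast
  have h': "bij_betw h {..<card V} V" using h by (simp only: atLeast0LessThan)
  have hV: "h j \<in> V" if "j < card V" for j using h' that unfolding bij_betw_def by blast
  have s1: "(\<Sum>j<card V. w (h j)) = 1" using sum.reindex_bij_betw[OF h', of w] w(2) by argo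
  have s2: "(\<lambda>E. \<Sum>v\<in>V. w v * p v E) = (\<lambda>E. \<Sum>j<card V. w (h j) * p (h j) E)"
  proof
    fix E
    show "(\<Sum>v\<in>V. w v * p v E) = (\<Sum>j<card V. w (h j) * p (h j) E)"
      using sum.reindex_bij_betw[OF h', of "\<lambda>v. w v * p v E"] by argo
  qed
  have k0: "0 < card V" using V card_gt_0_iff by blast
  have hh: "\<forall>j<card V. 0 \<le> w (h j) \<and> p (h j) \<in> K" using hV w p by blast
  show ?thesis unfolding conv_sf_def
    by (rule CollectI, rule exI[of _ "card V"], rule exI[of _ "\<lambda>j. w (h j)"], rule exI[of _ "\<lambda>j. p (h j)"])
      (use k0 s1 s2 hh in simp)
qed



lemma simple_pre_rep:
  fixes k :: nat and c :: "nat \<Rightarrow> real"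
  assumes alg: "algebra \<Omega> M" and H: "\<forall>j<k. H j \<in> M"
  shows "{x\<in>\<Omega>. R (\<Sum>j<k. c j * indicator (H j) x)} \<in> M"
  using H
proof (induction k arbitrary: R)
  case 0
  show ?case
  proof (cases "R 0")
    case True
    then show ?thesis using alg_facts(2)[OF alg] by simp
  next
    case False
    then show ?thesis using alg_facts(1)[OF alg] by simp
  qed
next
  case (Suc k)
  have Hk: "H k \<in> M" using Suc.prems by auto
  have Hj: "\<forall>j<k. H j \<in> M" using Suc.prems by auto
  have 1: "{x\<in>\<Omega>. (\<lambda>v. R (v + c k)) (\<Sum>j<k. c j * indicator (H j) x)} \<in> M" by (rule Suc.IH[of "\<lambda>v. R (v + c k)", OF Hj])
  have 2: "{x\<in>\<Omega>. R (\<Sum>j<k. c j * indicator (H j) x)} \<in> M" by (rule Suc.IH[of R, OF Hj])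
  have eq: "{x\<in>\<Omega>. R (\<Sum>j<Suc k. c j * indicator (H j) x)} =
    (H k \<inter> {x\<in>\<Omega>. (\<lambda>v. R (v + c k)) (\<Sum>j<k. c j * indicator (H j) x)}) \<union>
    ({x\<in>\<Omega>. R (\<Sum>j<k. c j * indicator (H j) x)} - H k)"
  proof -
    have sumS: "(\<Sum>j<Suc k. c j * indicator (H j) x) = (\<Sum>j<k. c j * indicator (H j) x) + (if x \<in> H k then c k else 0)" for x
      by (simp add: indicator_def)
    show ?thesis unfolding sumS by (auto split: if_splits)
  qed
  have 3: "H k \<inter> {x\<in>\<Omega>. (\<lambda>v. R (v + c k)) (\<Sum>j<k. c j * indicator (H j) x)} \<in> M"
    by (rule alg_facts(3)[OF alg Hk 1])
  have 4: "{x\<in>\<Omega>. R (\<Sum>j<k. c j * indicator (H j) x)} - H k \<in> M"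
    by (rule alg_facts(5)[OF alg 2 Hk])
  show ?case unfolding eq by (rule alg_facts(4)[OF alg 3 4])
qed

lemma simple_pre:
  assumes alg: "algebra \<Omega> M" and s: "s \<in> simple_funs \<Omega> M"
  shows "{x\<in>\<Omega>. R (s x)} \<in> M"
proof -
  obtain k :: nat and c H where H: "\<forall>j<k. H j \<in> M" and sr: "\<forall>x\<in>\<Omega>. s x = (\<Sum>j<k. c j * indicator (H j) x)"
    using s unfolding simple_funs_def by blast
  have eq: "{x\<in>\<Omega>. R (s x)} = {x\<in>\<Omega>. R (\<Sum>j<k. c j * indicator (H j) x)}" using sr by auto
  show ?thesis unfolding eq by (rule simple_pre_rep[OF alg H, of R c])
qed

lemma simple_finite_range:
  assumes s: "s \<in> simple_funs \<Omega> M"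
  shows "finite (s ` \<Omega>)"
proof -
  obtain k :: nat and c H where H: "\<forall>j<k. H j \<in> M" and sr: "\<forall>x\<in>\<Omega>. s x = (\<Sum>j<k. c j * indicator (H j) x)"
    using s unfolding simple_funs_def by blast
  have "s ` \<Omega> \<subseteq> (\<lambda>J. \<Sum>j\<in>J. c j) ` Pow {..<k}"
  proof
    fix y assume "y \<in> s ` \<Omega>"
    then obtain x where x: "x \<in> \<Omega>" "y = s x" by blast
    have "s x = (\<Sum>j<k. c j * indicator (H j) x)" using sr x by blast
    also have "\<dots> = (\<Sum>j<k. if x \<in> H j then c j else 0)" by (intro sum.cong) (auto simp: indicator_def)
    also have "\<dots> = (\<Sum>j\<in>{j\<in>{..<k}. x \<in> H j}. c j)" by (rule sum.inter_filter[symmetric]) simp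
    finally have "y = (\<lambda>J. \<Sum>j\<in>J. c j) {j\<in>{..<k}. x \<in> H j}" using x by simp
    then show "y \<in> (\<lambda>J. \<Sum>j\<in>J. c j) ` Pow {..<k}" by (rule image_eqI) auto
  qed
  then show ?thesis by (rule finite_subset) simp
qed

context
  fixes \<Omega> :: "'w set" and A :: "'w set set" and N :: "'i set"
    and M :: "'i \<Rightarrow> 'w set set" and t :: "'i \<Rightarrow> 'w \<Rightarrow> 'w set \<Rightarrow> real"
  assumes ts: "type_space \<Omega> A N M t"
begin

lemma ts_alg: "algebra \<Omega> A" using ts unfolding type_space_def by blast
lemma ts_algM: "i \<in> N \<Longrightarrow> algebra \<Omega> (M i)" using ts unfolding type_space_def by blast
lemma ts_MA: "i \<in> N \<Longrightarrow> M i \<subseteq> A" using ts unfolding type_space_def by blast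
lemma ts_pba: "i \<in> N \<Longrightarrow> \<omega> \<in> \<Omega> \<Longrightarrow> restrict_sf A (t i \<omega>) \<in> pba \<Omega> A"
  using ts unfolding type_space_def by blast
lemma ts_B: "i \<in> N \<Longrightarrow> E \<in> A \<Longrightarrow> (\<lambda>\<omega>. t i \<omega> E) \<in> Bfun \<Omega> (M i)"
  using ts unfolding type_space_def by blast
lemma ts_one: "i \<in> N \<Longrightarrow> E \<in> M i \<Longrightarrow> \<omega> \<in> E \<Longrightarrow> t i \<omega> E = 1"
  using ts unfolding type_space_def by blast
lemma ts_Nne: "N \<noteq> {}" using ts unfolding type_space_def by blast

lemma rs_val: "E \<in> A \<Longrightarrow> restrict_sf A g E = g E" unfolding restrict_sf_def by simp

lemma t_split: "i \<in> N \<Longrightarrow> \<omega> \<in> \<Omega> \<Longrightarrow> F \<in> A \<Longrightarrow> G \<in> A \<Longrightarrow> t i \<omega> F = t i \<omega> (F \<inter> G) + t i \<omega> (F - G)"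
  using pba_split[OF ts_alg ts_pba, of i \<omega> F G] alg_facts[OF ts_alg] by (simp add: rs_val)

lemma t_nonneg: "i \<in> N \<Longrightarrow> \<omega> \<in> \<Omega> \<Longrightarrow> F \<in> A \<Longrightarrow> 0 \<le> t i \<omega> F"
  using pba_vals(3)[OF ts_pba, of i \<omega> F] by (simp add: rs_val)

lemma t_le1: "i \<in> N \<Longrightarrow> \<omega> \<in> \<Omega> \<Longrightarrow> F \<in> A \<Longrightarrow> t i \<omega> F \<le> 1"
  using pba_le1[OF ts_alg ts_pba, of i \<omega> F] by (simp add: rs_val)

lemma t_mono: "i \<in> N \<Longrightarrow> \<omega> \<in> \<Omega> \<Longrightarrow> F \<in> A \<Longrightarrow> G \<in> A \<Longrightarrow> F \<subseteq> G \<Longrightarrow> t i \<omega> F \<le> t i \<omega> G"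
  using pba_mono[OF ts_alg ts_pba, of i \<omega> F G] by (simp add: rs_val)

lemma t_top: "i \<in> N \<Longrightarrow> \<omega> \<in> \<Omega> \<Longrightarrow> t i \<omega> \<Omega> = 1"
  using pba_vals(4)[OF ts_pba, of i \<omega>] alg_facts(2)[OF ts_alg] by (simp add: rs_val)

lemma t_compl: "i \<in> N \<Longrightarrow> \<omega> \<in> \<Omega> \<Longrightarrow> F \<in> A \<Longrightarrow> t i \<omega> (\<Omega> - F) = 1 - t i \<omega> F"
  using pba_compl[OF ts_alg ts_pba, of i \<omega> F] alg_facts[OF ts_alg] by (simp add: rs_val)

lemma t_cell:
  assumes i: "i \<in> N" and w: "\<omega> \<in> \<Omega>" and C: "C \<in> M i" and Y: "Y \<in> A"
  shows "t i \<omega> (Y \<inter> C) = (if \<omega> \<in> C then t i \<omega> Y else 0)"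
proof -
  have CA: "C \<in> A" using C ts_MA[OF i] by blast
  have YC: "Y \<inter> C \<in> A" "Y - C \<in> A" "\<Omega> - C \<in> A" using alg_facts[OF ts_alg] Y CA by auto
  show ?thesis
  proof (cases "\<omega> \<in> C")
    case True
    have "t i \<omega> C = 1" using ts_one[OF i C True] .
    then have "t i \<omega> (\<Omega> - C) = 0" using t_compl[OF i w CA] by simp
    moreover have "t i \<omega> (Y - C) \<le> t i \<omega> (\<Omega> - C)" using t_mono[OF i w YC(2) YC(3)] Y alg_facts(6)[OF ts_alg] by blast
    moreover have "0 \<le> t i \<omega> (Y - C)" using t_nonneg[OF i w YC(2)] .
    ultimately show ?thesis using t_split[OF i w Y CA] True by simp
  next
    case False
    have "\<Omega> - C \<in> M i" using C ts_algM[OF i] by (simp add: algebra.compl_sets)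
    then have "t i \<omega> (\<Omega> - C) = 1" using ts_one[OF i] w False by blast
    then have "t i \<omega> C = 0" using t_compl[OF i w CA] by simp
    moreover have "t i \<omega> (Y \<inter> C) \<le> t i \<omega> C" using t_mono[OF i w YC(1) CA] by blast
    moreover have "0 \<le> t i \<omega> (Y \<inter> C)" using t_nonneg[OF i w YC(1)] .
    ultimately show ?thesis using False by simp
  qed
qed

lemma types_pba: "i \<in> N \<Longrightarrow> {restrict_sf A (t i \<omega>) | \<omega>. \<omega> \<in> \<Omega>} \<subseteq> pba \<Omega> A"
  using ts_pba by blast

lemma conv_types_pba: "i \<in> N \<Longrightarrow> conv_sf {restrict_sf A (t i \<omega>) | \<omega>. \<omega> \<in> \<Omega>} \<subseteq> pba \<Omega> A"
  by (rule conv_pba[OF types_pba])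

lemma conv_types_val:
  assumes i: "i \<in> N" and nu: "\<nu> \<in> conv_sf {restrict_sf A (t i \<omega>) | \<omega>. \<omega> \<in> \<Omega>}"
  obtains k :: nat and a \<omega> where "\<forall>j<k. 0 \<le> a j \<and> \<omega> j \<in> \<Omega>" "(\<Sum>j<k. a j) = 1"
    "\<And>F. F \<in> A \<Longrightarrow> \<nu> F = (\<Sum>j<k. a j * t i (\<omega> j) F)"
proof -
  obtain k :: nat and a p where h: "\<forall>j<k. 0 \<le> a j \<and> p j \<in> {restrict_sf A (t i \<omega>) | \<omega>. \<omega> \<in> \<Omega>}"
    "(\<Sum>j<k. a j) = 1" "\<nu> = (\<lambda>E. \<Sum>j<k. a j * p j E)"
    using nu unfolding conv_sf_def by blast
  have "\<forall>j. \<exists>w. j < k \<longrightarrow> (w \<in> \<Omega> \<and> p j = restrict_sf A (t i w))" using h(1) by blast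
  from choice[OF this] obtain \<omega> where w0: "\<forall>j. j < k \<longrightarrow> (\<omega> j \<in> \<Omega> \<and> p j = restrict_sf A (t i (\<omega> j)))"
    by (elim exE) (rule that)
  have w: "\<And>j. j < k \<Longrightarrow> \<omega> j \<in> \<Omega> \<and> p j = restrict_sf A (t i (\<omega> j))" using w0 by blast
  show ?thesis
  proof (rule that[of k a \<omega>])
    show "\<forall>j<k. 0 \<le> a j \<and> \<omega> j \<in> \<Omega>" using h(1) w by blast
    show "(\<Sum>j<k. a j) = 1" by (rule h(2))
    fix F assume F: "F \<in> A"
    show "\<nu> F = (\<Sum>j<k. a j * t i (\<omega> j) F)" unfolding h(3) using w F by (intro sum.cong) (auto simp: rs_val)
  qed
qed

end



definition repr :: "'w set set \<Rightarrow> 'w set \<Rightarrow> 'w set \<Rightarrow> 'w set" where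
  "repr A S H = (SOME F. F \<in> A \<and> H = F \<inter> S)"

lemma induced_t_repr: "induced_t A S t i \<omega> H = t i \<omega> (repr A S H)"
  unfolding induced_t_def repr_def by (rule refl)

lemma repr_mem:
  assumes "H \<in> trace_field A S"
  shows "repr A S H \<in> A" "H = repr A S H \<inter> S"
proof -
  have "\<exists>F. F \<in> A \<and> H = F \<inter> S" using assms unfolding trace_field_def by blast
  then have "repr A S H \<in> A \<and> H = repr A S H \<inter> S" unfolding repr_def by (rule someI_ex)
  then show "repr A S H \<in> A" "H = repr A S H \<inter> S" by auto
qed

lemma trace_mem: "F \<in> A \<Longrightarrow> F \<inter> S \<in> trace_field A S"
  unfolding trace_field_def by blast

lemma trace_alg:
  assumes alg: "algebra \<Omega> A" and S: "S \<subseteq> \<Omega>"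
  shows "algebra S (trace_field A S)"
  unfolding algebra_iff_Int
proof (intro conjI ballI)
  show "trace_field A S \<subseteq> Pow S" unfolding trace_field_def by blast
  show "{} \<in> trace_field A S" using trace_mem[OF alg_facts(1)[OF alg], of S] by simp
  fix a assume a: "a \<in> trace_field A S"
  then obtain F where F: "F \<in> A" "a = F \<inter> S" unfolding trace_field_def by blast
  have "S - a = (\<Omega> - F) \<inter> S" using F S by blast
  then show "S - a \<in> trace_field A S" using trace_mem[OF alg_facts(5)[OF alg alg_facts(2)[OF alg] F(1)]] by simp
  fix b assume b: "b \<in> trace_field A S"
  then obtain G where G: "G \<in> A" "b = G \<inter> S" unfolding trace_field_def by blast
  have "a \<inter> b = (F \<inter> G) \<inter> S" using F G by blast
  then show "a \<inter> b \<in> trace_field A S" using trace_mem[OF alg_facts(3)[OF alg F(1) G(1)]] by simp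
qed

context
  fixes \<Omega> :: "'w set" and A :: "'w set set" and N :: "'i set"
    and M :: "'i \<Rightarrow> 'w set set" and t :: "'i \<Rightarrow> 'w \<Rightarrow> 'w set \<Rightarrow> real"
    and I :: "'i set" and S :: "'w set" and E :: "'w set"
  assumes ts: "type_space \<Omega> A N M t" and IN: "I \<subseteq> N" and SO: "S \<subseteq> \<Omega>"
    and EA: "E \<in> A" and ES: "E \<subseteq> S" and Eone: "\<forall>\<omega>\<in>S. \<forall>i\<in>I. t i \<omega> E = 1"
begin

lemma repr_E: "F \<in> A \<Longrightarrow> H = F \<inter> S \<Longrightarrow> repr A S H \<inter> E = F \<inter> E"
proof -
  assume F: "F \<in> A" and H: "H = F \<inter> S"
  have "H = repr A S H \<inter> S" using repr_mem(2)[OF trace_mem[OF F]] H by simp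
  then have "repr A S H \<inter> S = F \<inter> S" using H by simp
  then have "repr A S H \<inter> S \<inter> E = F \<inter> S \<inter> E" by simp
  then show ?thesis using ES by blast
qed

lemma WD:
  assumes i: "i \<in> I" and w: "\<omega> \<in> S" and F: "F \<in> A"
  shows "t i \<omega> F = t i \<omega> (F \<inter> E)"
proof -
  have iN: "i \<in> N" using i IN by blast
  have wO: "\<omega> \<in> \<Omega>" using w SO by blast
  have e1: "t i \<omega> E = 1" using Eone w i by blast
  have FE: "F - E \<in> A" "\<Omega> - E \<in> A" using alg_facts(5)[OF ts_alg[OF ts]] F EA alg_facts(2)[OF ts_alg[OF ts]] by auto
  have "t i \<omega> (\<Omega> - E) = 0" using t_compl[OF ts iN wO EA] e1 by simp
  moreover have "t i \<omega> (F - E) \<le> t i \<omega> (\<Omega> - E)"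
    using t_mono[OF ts iN wO FE(1) FE(2)] alg_facts(6)[OF ts_alg[OF ts] F] by blast
  moreover have "0 \<le> t i \<omega> (F - E)" by (rule t_nonneg[OF ts iN wO FE(1)])
  ultimately show ?thesis using t_split[OF ts iN wO F EA] by simp
qed

lemma ind_val:
  assumes i: "i \<in> I" and w: "\<omega> \<in> S" and F: "F \<in> A"
  shows "induced_t A S t i \<omega> (F \<inter> S) = t i \<omega> F"
proof -
  have r: "repr A S (F \<inter> S) \<in> A" using repr_mem(1)[OF trace_mem[OF F]] .
  have "induced_t A S t i \<omega> (F \<inter> S) = t i \<omega> (repr A S (F \<inter> S))" by (rule induced_t_repr)
  also have "\<dots> = t i \<omega> (repr A S (F \<inter> S) \<inter> E)" by (rule WD[OF i w r])
  also have "repr A S (F \<inter> S) \<inter> E = F \<inter> E" by (rule repr_E[OF F refl])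
  also have "t i \<omega> (F \<inter> E) = t i \<omega> F" by (rule WD[OF i w F, symmetric])
  finally show ?thesis .
qed

lemma ind_pba:
  assumes i: "i \<in> I" and w: "\<omega> \<in> S"
  shows "restrict_sf (trace_field A S) (induced_t A S t i \<omega>) \<in> pba S (trace_field A S)"
  unfolding pba_def
proof (intro CollectI conjI allI impI ballI)
  have iN: "i \<in> N" using i IN by blast
  have wO: "\<omega> \<in> \<Omega>" using w SO by blast
  fix H assume "H \<notin> trace_field A S"
  then show "restrict_sf (trace_field A S) (induced_t A S t i \<omega>) H = 0" unfolding restrict_sf_def by simp
next
  have iN: "i \<in> N" using i IN by blast
  have wO: "\<omega> \<in> \<Omega>" using w SO by blast
  fix H1 H2 assume H1: "H1 \<in> trace_field A S" and H2: "H2 \<in> trace_field A S" and d: "H1 \<inter> H2 = {}"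
  obtain F1 where F1: "F1 \<in> A" "H1 = F1 \<inter> S" using H1 unfolding trace_field_def by blast
  obtain F2 where F2: "F2 \<in> A" "H2 = F2 \<inter> S" using H2 unfolding trace_field_def by blast
  have U: "F1 \<union> F2 \<in> A" by (rule alg_facts(4)[OF ts_alg[OF ts] F1(1) F2(1)])
  have HU: "H1 \<union> H2 = (F1 \<union> F2) \<inter> S" using F1 F2 by blast
  have a1: "F1 \<inter> E \<in> A" by (rule alg_facts(3)[OF ts_alg[OF ts] F1(1) EA])
  have a2: "F2 \<inter> E \<in> A" by (rule alg_facts(3)[OF ts_alg[OF ts] F2(1) EA])
  have dd: "(F1 \<inter> E) \<inter> (F2 \<inter> E) = {}" using d F1 F2 ES by blast
  have eqU: "(F1 \<union> F2) \<inter> E = (F1 \<inter> E) \<union> (F2 \<inter> E)" by blast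
  have add: "t i \<omega> ((F1 \<inter> E) \<union> (F2 \<inter> E)) = t i \<omega> (F1 \<inter> E) + t i \<omega> (F2 \<inter> E)"
    using pba_vals(2)[OF ts_pba[OF ts iN wO] a1 a2 dd] alg_facts(4)[OF ts_alg[OF ts] a1 a2] a1 a2
    by (simp add: rs_val[OF ts])
  have "H1 \<union> H2 \<in> trace_field A S" using HU trace_mem[OF U] by simp
  then have "restrict_sf (trace_field A S) (induced_t A S t i \<omega>) (H1 \<union> H2) = induced_t A S t i \<omega> ((F1 \<union> F2) \<inter> S)"
    unfolding restrict_sf_def HU by simp
  also have "\<dots> = t i \<omega> (F1 \<union> F2)" by (rule ind_val[OF i w U])
  also have "\<dots> = t i \<omega> ((F1 \<union> F2) \<inter> E)" by (rule WD[OF i w U])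
  also have "\<dots> = t i \<omega> (F1 \<inter> E) + t i \<omega> (F2 \<inter> E)" unfolding eqU by (rule add)
  also have "\<dots> = t i \<omega> F1 + t i \<omega> F2" using WD[OF i w F1(1)] WD[OF i w F2(1)] by simp
  also have "\<dots> = restrict_sf (trace_field A S) (induced_t A S t i \<omega>) H1 + restrict_sf (trace_field A S) (induced_t A S t i \<omega>) H2"
    unfolding restrict_sf_def using H1 H2 F1 F2 ind_val[OF i w F1(1)] ind_val[OF i w F2(1)] by simp
  finally show "restrict_sf (trace_field A S) (induced_t A S t i \<omega>) (H1 \<union> H2) =
    restrict_sf (trace_field A S) (induced_t A S t i \<omega>) H1 + restrict_sf (trace_field A S) (induced_t A S t i \<omega>) H2" .
next
  have iN: "i \<in> N" using i IN by blast
  have wO: "\<omega> \<in> \<Omega>" using w SO by blast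
  fix H assume H: "H \<in> trace_field A S"
  obtain F where F: "F \<in> A" "H = F \<inter> S" using H unfolding trace_field_def by blast
  show "0 \<le> restrict_sf (trace_field A S) (induced_t A S t i \<omega>) H"
    unfolding restrict_sf_def using H F ind_val[OF i w F(1)] t_nonneg[OF ts iN wO F(1)] by simp
next
  have iN: "i \<in> N" using i IN by blast
  have wO: "\<omega> \<in> \<Omega>" using w SO by blast
  have O: "\<Omega> \<in> A" by (rule alg_facts(2)[OF ts_alg[OF ts]])
  have SS: "S = \<Omega> \<inter> S" using SO by blast
  have St: "S \<in> trace_field A S" using trace_mem[OF O, of S] SS by simp
  have "restrict_sf (trace_field A S) (induced_t A S t i \<omega>) S = induced_t A S t i \<omega> (\<Omega> \<inter> S)"
    unfolding restrict_sf_def using St SS by simp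
  also have "\<dots> = t i \<omega> \<Omega>" by (rule ind_val[OF i w O])
  also have "\<dots> = 1" by (rule t_top[OF ts iN wO])
  finally show "restrict_sf (trace_field A S) (induced_t A S t i \<omega>) S = 1" .
qed

lemma ind_types_pba: "i \<in> I \<Longrightarrow> {restrict_sf (trace_field A S) (induced_t A S t i \<omega>) | \<omega>. \<omega> \<in> S} \<subseteq> pba S (trace_field A S)"
  using ind_pba by blast

lemma ind_conv_pba: "i \<in> I \<Longrightarrow> conv_sf {restrict_sf (trace_field A S) (induced_t A S t i \<omega>) | \<omega>. \<omega> \<in> S} \<subseteq> pba S (trace_field A S)"
  by (rule conv_pba[OF ind_types_pba])

end



lemma conv_param:
  assumes nu: "\<nu> \<in> conv_sf {g \<omega> | \<omega>. \<omega> \<in> D}"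
  obtains k :: nat and a \<omega> where "\<forall>j<k. 0 \<le> a j \<and> \<omega> j \<in> D" "(\<Sum>j<k. a j) = 1"
    "\<nu> = (\<lambda>H. \<Sum>j<k. a j * g (\<omega> j) H)"
proof -
  obtain k :: nat and a p where h: "\<forall>j<k. 0 \<le> a j \<and> p j \<in> {g \<omega> | \<omega>. \<omega> \<in> D}"
    "(\<Sum>j<k. a j) = 1" "\<nu> = (\<lambda>E. \<Sum>j<k. a j * p j E)"
    using nu unfolding conv_sf_def by blast
  have "\<forall>j. \<exists>w. j < k \<longrightarrow> (w \<in> D \<and> p j = g w)" using h(1) by blast
  from choice[OF this] obtain \<omega> where w0: "\<forall>j. j < k \<longrightarrow> (\<omega> j \<in> D \<and> p j = g (\<omega> j))"
    by (elim exE) (rule that)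
  show ?thesis
  proof (rule that[of k a \<omega>])
    show "\<forall>j<k. 0 \<le> a j \<and> \<omega> j \<in> D" using h(1) w0 by blast
    show "(\<Sum>j<k. a j) = 1" by (rule h(2))
    show "\<nu> = (\<lambda>H. \<Sum>j<k. a j * g (\<omega> j) H)" unfolding h(3)
    proof
      fix H show "(\<Sum>j<k. a j * p j H) = (\<Sum>j<k. a j * g (\<omega> j) H)"
        using w0 by (intro sum.cong) auto
    qed
  qed
qed

lemma conv_param_intro:
  assumes "0 < k" "\<forall>j<k. 0 \<le> a j \<and> \<omega> j \<in> D" "(\<Sum>j<k. a j) = 1"
  shows "(\<lambda>H. \<Sum>j<(k::nat). a j * g (\<omega> j) H) \<in> conv_sf {g \<omega> | \<omega>. \<omega> \<in> D}"
proof -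
  have hh: "\<forall>j<k. 0 \<le> a j \<and> g (\<omega> j) \<in> {g \<omega> | \<omega>. \<omega> \<in> D}" using assms(2) by blast
  show ?thesis unfolding conv_sf_def
    apply (rule CollectI)
    apply (rule exI[of _ k])
    apply (rule exI[of _ a])
    apply (rule exI[of _ "\<lambda>j. g (\<omega> j)"])
    using assms hh by simp
qed

context
  fixes \<Omega> :: "'w set" and A :: "'w set set" and N :: "'i set"
    and M :: "'i \<Rightarrow> 'w set set" and t :: "'i \<Rightarrow> 'w \<Rightarrow> 'w set \<Rightarrow> real"
    and I :: "'i set" and S :: "'w set" and E :: "'w set"
  assumes ts: "type_space \<Omega> A N M t" and IN: "I \<subseteq> N" and SO: "S \<subseteq> \<Omega>"
    and EA: "E \<in> A" and ES: "E \<subseteq> S" and Eone: "\<forall>\<omega>\<in>S. \<forall>i\<in>I. t i \<omega> E = 1"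
begin

lemma back_dir:
  assumes Ine: "I \<noteq> {}" and Q: "\<forall>i\<in>I. Q \<in> Pi_set S (trace_field A S) (induced_t A S t) i"
  shows "\<exists>P\<in>pba \<Omega> A. (\<forall>i\<in>I. P \<in> Pi_set \<Omega> A t i) \<and> Inf {P E | E. E \<in> A \<and> S \<subseteq> E} > 0"
proof -
  have alg: "algebra \<Omega> A" by (rule ts_alg[OF ts])
  have talg: "algebra S (trace_field A S)" by (rule trace_alg[OF alg SO])
  obtain i0 where i0: "i0 \<in> I" using Ine by blast
  have Qpba: "Q \<in> pba S (trace_field A S)"
    using closure_pba[OF talg ind_conv_pba[OF ts IN SO EA ES Eone i0]] Q i0 unfolding Pi_set_def by blast
  define P where "P F = (if F \<in> A then Q (F \<inter> S) else 0)" for F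
  have O: "\<Omega> \<in> A" by (rule alg_facts(2)[OF alg])
  have PS: "P F = 1" if "F \<in> A" "S \<subseteq> F" for F
  proof -
    have "F \<inter> S = S" using that by blast
    then show ?thesis unfolding P_def using that pba_vals(4)[OF Qpba] by simp
  qed
  have Ppba: "P \<in> pba \<Omega> A" unfolding pba_def
  proof (intro CollectI conjI allI impI ballI)
    fix F assume "F \<notin> A" then show "P F = 0" unfolding P_def by simp
  next
    fix F G assume F: "F \<in> A" and G: "G \<in> A" and d: "F \<inter> G = {}"
    have FG: "F \<union> G \<in> A" by (rule alg_facts(4)[OF alg F G])
    have e: "(F \<union> G) \<inter> S = (F \<inter> S) \<union> (G \<inter> S)" by blast
    have "Q ((F \<inter> S) \<union> (G \<inter> S)) = Q (F \<inter> S) + Q (G \<inter> S)"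
      using pba_vals(2)[OF Qpba trace_mem[OF F] trace_mem[OF G]] d by blast
    then show "P (F \<union> G) = P F + P G" unfolding P_def using F G FG e by simp
  next
    fix F assume F: "F \<in> A" then show "0 \<le> P F" unfolding P_def using pba_vals(3)[OF Qpba trace_mem[OF F]] by simp
  next
    show "P \<Omega> = 1" by (rule PS[OF O SO])
  qed
  have Inf1: "Inf {P E | E. E \<in> A \<and> S \<subseteq> E} = 1"
  proof -
    have "{P E | E. E \<in> A \<and> S \<subseteq> E} = {1}"
    proof
      show "{P E | E. E \<in> A \<and> S \<subseteq> E} \<subseteq> {1}" using PS by blast
      have "P \<Omega> \<in> {P E | E. E \<in> A \<and> S \<subseteq> E}" using O SO by blast
      then show "{1} \<subseteq> {P E | E. E \<in> A \<and> S \<subseteq> E}" using PS[OF O SO] by simp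
    qed
    then show ?thesis by simp
  qed
  have PPi: "P \<in> Pi_set \<Omega> A t i" if i: "i \<in> I" for i
  proof -
    have iN: "i \<in> N" using i IN by blast
    have Qi: "Q \<in> wstar_top S (trace_field A S) closure_of conv_sf {restrict_sf (trace_field A S) (induced_t A S t i \<omega>) | \<omega>. \<omega> \<in> S}"
      using Q i unfolding Pi_set_def by blast
    show ?thesis unfolding Pi_set_def
    proof (rule approx_closure[OF alg conv_types_pba[OF ts iN] Ppba])
      fix \<G> :: "'w set set" and \<epsilon> :: real assume G: "finite \<G>" "\<G> \<subseteq> A" and e: "\<epsilon> > 0"
      have G': "finite ((\<lambda>G. G \<inter> S) ` \<G>)" "(\<lambda>G. G \<inter> S) ` \<G> \<subseteq> trace_field A S"
        using G trace_mem by auto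
      obtain \<nu>' where nu': "\<nu>' \<in> conv_sf {restrict_sf (trace_field A S) (induced_t A S t i \<omega>) | \<omega>. \<omega> \<in> S}"
        "\<forall>H\<in>(\<lambda>G. G \<inter> S) ` \<G>. \<bar>\<nu>' H - Q H\<bar> < \<epsilon>"
        using closure_approx(2)[OF talg Qi G' e] by blast
      obtain k :: nat and a \<omega> where k: "\<forall>j<k. 0 \<le> a j \<and> \<omega> j \<in> S" "(\<Sum>j<k. a j) = 1"
        and nu'e: "\<nu>' = (\<lambda>H. \<Sum>j<k. a j * restrict_sf (trace_field A S) (induced_t A S t i (\<omega> j)) H)"
        using conv_param[OF nu'(1)] by blast
      have k0: "0 < k" using k(2) by (cases k) auto
      have kO: "\<forall>j<k. 0 \<le> a j \<and> \<omega> j \<in> \<Omega>" using k(1) SO by blast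
      define \<nu> where "\<nu> = (\<lambda>H. \<Sum>j<k. a j * restrict_sf A (t i (\<omega> j)) H)"
      have nuc: "\<nu> \<in> conv_sf {restrict_sf A (t i \<omega>) | \<omega>. \<omega> \<in> \<Omega>}"
        unfolding \<nu>_def by (rule conv_param_intro[OF k0 kO k(2)])
      have "\<forall>G\<in>\<G>. \<bar>\<nu> G - P G\<bar> < \<epsilon>"
      proof
        fix G assume g: "G \<in> \<G>"
        have GA: "G \<in> A" using g G by blast
        have "\<nu>' (G \<inter> S) = (\<Sum>j<k. a j * t i (\<omega> j) G)"
          unfolding nu'e restrict_sf_def using trace_mem[OF GA] ind_val[OF ts IN SO EA ES Eone i _ GA] k(1)
          by (intro sum.cong) auto
        moreover have "\<nu> G = (\<Sum>j<k. a j * t i (\<omega> j) G)"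
          unfolding \<nu>_def restrict_sf_def using GA by simp
        moreover have "P G = Q (G \<inter> S)" unfolding P_def using GA by simp
        moreover have "\<bar>\<nu>' (G \<inter> S) - Q (G \<inter> S)\<bar> < \<epsilon>" using nu'(2) g by blast
        ultimately show "\<bar>\<nu> G - P G\<bar> < \<epsilon>" by simp
      qed
      then show "\<exists>\<nu>\<in>conv_sf {restrict_sf A (t i \<omega>) | \<omega>. \<omega> \<in> \<Omega>}. \<forall>G\<in>\<G>. \<bar>\<nu> G - P G\<bar> < \<epsilon>"
        using nuc by blast
    qed
  qed
  show ?thesis
  proof (rule bexI[OF _ Ppba])
    show "(\<forall>i\<in>I. P \<in> Pi_set \<Omega> A t i) \<and> Inf {P E | E. E \<in> A \<and> S \<subseteq> E} > 0"
      using PPi Inf1 by simp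
  qed
qed

end



lemma pba_partition:
  assumes alg: "algebra \<Omega> A" and P: "P \<in> pba \<Omega> A" and V: "finite V"
    and C: "\<forall>v\<in>V. C v \<in> A" and dis: "\<forall>v\<in>V. \<forall>u\<in>V. v \<noteq> u \<longrightarrow> C v \<inter> C u = {}"
  shows "Y \<in> A \<Longrightarrow> Y \<subseteq> (\<Union>v\<in>V. C v) \<Longrightarrow> P Y = (\<Sum>v\<in>V. P (Y \<inter> C v))"
  using V C dis
proof (induction V arbitrary: Y rule: finite_induct)
  case empty
  then have "Y = {}" by blast
  then show ?case using pba_empty[OF alg P] by simp
next
  case (insert v0 V)
  have Cv0: "C v0 \<in> A" using insert.prems by blast
  have YD: "Y - C v0 \<in> A" by (rule alg_facts(5)[OF alg insert.prems(1) Cv0])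
  have YDs: "Y - C v0 \<subseteq> (\<Union>v\<in>V. C v)" using insert.prems(2) by blast
  have CV: "\<forall>v\<in>V. C v \<in> A" using insert.prems by blast
  have dV: "\<forall>v\<in>V. \<forall>u\<in>V. v \<noteq> u \<longrightarrow> C v \<inter> C u = {}" using insert.prems by blast
  have IH: "P (Y - C v0) = (\<Sum>v\<in>V. P ((Y - C v0) \<inter> C v))" by (rule insert.IH[OF YD YDs CV dV])
  have eq: "(Y - C v0) \<inter> C v = Y \<inter> C v" if "v \<in> V" for v
  proof -
    have "v \<noteq> v0" using that insert.hyps(2) by blast
    then have "C v0 \<inter> C v = {}" using insert.prems(4) that by blast
    then show ?thesis by blast
  qed
  have "P Y = P (Y \<inter> C v0) + P (Y - C v0)" by (rule pba_split[OF alg P insert.prems(1) Cv0])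
  also have "P (Y - C v0) = (\<Sum>v\<in>V. P (Y \<inter> C v))" unfolding IH using eq by (intro sum.cong) auto
  finally show ?case using insert.hyps by simp
qed

context
  fixes \<Omega> :: "'w set" and A :: "'w set set" and N :: "'i set"
    and M :: "'i \<Rightarrow> 'w set set" and t :: "'i \<Rightarrow> 'w \<Rightarrow> 'w set \<Rightarrow> real"
    and I :: "'i set" and S :: "'w set" and E :: "'w set"
  assumes ts: "type_space \<Omega> A N M t" and IN: "I \<subseteq> N" and SO: "S \<subseteq> \<Omega>"
    and EA: "E \<in> A" and ES: "E \<subseteq> S" and Eone: "\<forall>\<omega>\<in>S. \<forall>i\<in>I. t i \<omega> E = 1"
begin

lemma t_in_M:
  assumes i: "i \<in> N" and w: "\<omega> \<in> \<Omega>" and W: "W \<in> M i"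
  shows "t i \<omega> W = (if \<omega> \<in> W then 1 else 0)"
proof -
  have WA: "W \<in> A" using W ts_MA[OF ts i] by blast
  have WO: "\<Omega> \<inter> W = W" using alg_facts(6)[OF ts_alg[OF ts] WA] by blast
  have "t i \<omega> (\<Omega> \<inter> W) = (if \<omega> \<in> W then t i \<omega> \<Omega> else 0)"
    by (rule t_cell[OF ts i w W alg_facts(2)[OF ts_alg[OF ts]]])
  then show ?thesis using WO t_top[OF ts i w] by simp
qed

lemma posE:
  assumes Ine: "I \<noteq> {}" and Ppba: "P \<in> pba \<Omega> A" and PPi: "\<forall>i\<in>I. P \<in> Pi_set \<Omega> A t i"
    and cpos: "Inf {P E | E. E \<in> A \<and> S \<subseteq> E} > 0"
  shows "P E > 0"
proof -
  have alg: "algebra \<Omega> A" by (rule ts_alg[OF ts])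
  obtain i where i: "i \<in> I" using Ine by blast
  have iN: "i \<in> N" using i IN by blast
  define c where "c = Inf {P E | E. E \<in> A \<and> S \<subseteq> E}"
  have c0: "c > 0" using cpos unfolding c_def .
  have "(1/4::real) > 0" by simp
  then obtain s where s: "s \<in> simple_funs \<Omega> (M i)" "\<forall>x\<in>\<Omega>. \<bar>t i x E - s x\<bar> < 1/4"
    using ts_B[OF ts iN EA] unfolding Bfun_def by blast
  define W where "W = {x\<in>\<Omega>. s x > 1/2}"
  have WM: "W \<in> M i" unfolding W_def by (rule simple_pre[OF ts_algM[OF ts iN] s(1)])
  have WA: "W \<in> A" using WM ts_MA[OF ts iN] by blast
  have SW: "S \<subseteq> W"
  proof
    fix x assume x: "x \<in> S"
    then have xO: "x \<in> \<Omega>" using SO by blast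
    have "t i x E = 1" using Eone x i by blast
    moreover have "\<bar>t i x E - s x\<bar> < 1/4" using s(2) xO by blast
    ultimately have "s x > 1/2" by linarith
    then show "x \<in> W" unfolding W_def using xO by blast
  qed
  have onW: "t i x E > 1/4" if "x \<in> W" for x
  proof -
    have "x \<in> \<Omega>" "s x > 1/2" using that unfolding W_def by auto
    moreover have "\<bar>t i x E - s x\<bar> < 1/4" using s(2) \<open>x \<in> \<Omega>\<close> by blast
    ultimately show ?thesis by linarith
  qed
  have bb: "bdd_below {P E | E. E \<in> A \<and> S \<subseteq> E}"
    by (rule bdd_belowI[of _ 0]) (use pba_vals(3)[OF Ppba] in blast)
  have PW: "P W \<ge> c" unfolding c_def by (rule cInf_lower[OF _ bb]) (use WA SW in blast)
  have Pi: "P \<in> wstar_top \<Omega> A closure_of conv_sf {restrict_sf A (t i \<omega>) | \<omega>. \<omega> \<in> \<Omega>}"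
    using PPi i unfolding Pi_set_def by blast
  have fin: "finite {E, W}" "{E, W} \<subseteq> A" using EA WA by auto
  have c10: "c / 10 > 0" using c0 by simp
  obtain \<nu> where nu: "\<nu> \<in> conv_sf {restrict_sf A (t i \<omega>) | \<omega>. \<omega> \<in> \<Omega>}" "\<forall>G\<in>{E, W}. \<bar>\<nu> G - P G\<bar> < c / 10"
    using closure_approx(2)[OF alg Pi fin c10] by blast
  obtain k :: nat and a \<omega> where k: "\<forall>j<k. 0 \<le> a j \<and> \<omega> j \<in> \<Omega>" "(\<Sum>j<k. a j) = 1"
    and nuv: "\<And>F. F \<in> A \<Longrightarrow> \<nu> F = (\<Sum>j<k. a j * t i (\<omega> j) F)"
    using conv_types_val[OF ts iN nu(1)] by blast
  have nuW: "\<nu> W = (\<Sum>j<k. a j * (if \<omega> j \<in> W then 1 else 0))"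
    unfolding nuv[OF WA] using k(1) t_in_M[OF iN _ WM] by (intro sum.cong) auto
  have "\<nu> E = (\<Sum>j<k. a j * t i (\<omega> j) E)" by (rule nuv[OF EA])
  also have "\<dots> \<ge> (\<Sum>j<k. a j * (if \<omega> j \<in> W then 1/4 else 0))"
  proof (rule sum_mono)
    fix j assume "j \<in> {..<k}"
    then have j: "0 \<le> a j" "\<omega> j \<in> \<Omega>" using k(1) by auto
    have "(if \<omega> j \<in> W then 1/4 else 0) \<le> t i (\<omega> j) E"
      using onW[of "\<omega> j"] t_nonneg[OF ts iN j(2) EA] by auto
    then show "a j * (if \<omega> j \<in> W then 1/4 else 0) \<le> a j * t i (\<omega> j) E"
      using j(1) by (rule mult_left_mono)
  qed
  finally have "\<nu> E \<ge> (\<Sum>j<k. a j * (if \<omega> j \<in> W then 1/4 else 0))" .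
  moreover have "(\<Sum>j<k. a j * (if \<omega> j \<in> W then 1/4 else 0)) = \<nu> W / 4"
    unfolding nuW sum_divide_distrib by (intro sum.cong) auto
  ultimately have nE: "\<nu> E \<ge> \<nu> W / 4" by simp
  have "\<bar>\<nu> E - P E\<bar> < c / 10" "\<bar>\<nu> W - P W\<bar> < c / 10" using nu(2) by auto
  then show ?thesis using nE PW c0 by linarith
qed

end



context
  fixes \<Omega> :: "'w set" and A :: "'w set set" and N :: "'i set"
    and M :: "'i \<Rightarrow> 'w set set" and t :: "'i \<Rightarrow> 'w \<Rightarrow> 'w set \<Rightarrow> real"
    and I :: "'i set" and S :: "'w set" and E :: "'w set"
  assumes ts: "type_space \<Omega> A N M t" and IN: "I \<subseteq> N" and SO: "S \<subseteq> \<Omega>"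
    and EA: "E \<in> A" and ES: "E \<subseteq> S" and Eone: "\<forall>\<omega>\<in>S. \<forall>i\<in>I. t i \<omega> E = 1"
begin

lemma ptw:
  assumes i: "i \<in> I" and w: "\<omega> \<in> \<Omega>" and y: "y \<in> E" and G: "G \<in> A"
    and dE: "\<bar>t i \<omega> E - t i y E\<bar> < 2 * \<delta>" and dG: "\<bar>t i \<omega> G - t i y G\<bar> < 2 * \<delta>"
  shows "\<bar>t i \<omega> (G \<inter> E) - t i \<omega> E * t i y G\<bar> \<le> 6 * \<delta>"
proof -
  have iN: "i \<in> N" using i IN by blast
  have yS: "y \<in> S" using y ES by blast
  have yO: "y \<in> \<Omega>" using yS SO by blast
  have ty: "t i y E = 1" using Eone yS i by blast
  have GE: "G - E \<in> A" "\<Omega> - E \<in> A" "G \<inter> E \<in> A"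
    using alg_facts(5)[OF ts_alg[OF ts] G EA] alg_facts(5)[OF ts_alg[OF ts] alg_facts(2)[OF ts_alg[OF ts]] EA]
      alg_facts(3)[OF ts_alg[OF ts] G EA] by auto
  have sp: "t i \<omega> G = t i \<omega> (G \<inter> E) + t i \<omega> (G - E)" by (rule t_split[OF ts iN w G EA])
  have m1: "t i \<omega> (G - E) \<le> t i \<omega> (\<Omega> - E)"
    using t_mono[OF ts iN w GE(1) GE(2)] alg_facts(6)[OF ts_alg[OF ts] G] by blast
  have m2: "t i \<omega> (\<Omega> - E) = 1 - t i \<omega> E" by (rule t_compl[OF ts iN w EA])
  have m3: "0 \<le> t i \<omega> (G - E)" by (rule t_nonneg[OF ts iN w GE(1)])
  have tyG: "0 \<le> t i y G" "t i y G \<le> 1" using t_nonneg[OF ts iN yO G] t_le1[OF ts iN yO G] by auto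
  have tE1: "t i \<omega> E \<le> 1" by (rule t_le1[OF ts iN w EA])
  define p where "p = (1 - t i \<omega> E) * t i y G"
  have p0: "0 \<le> p" unfolding p_def using tE1 tyG by simp
  have p1: "p \<le> 1 - t i \<omega> E" unfolding p_def using tE1 tyG by (simp add: mult_left_le)
  have peq: "p = t i y G - t i \<omega> E * t i y G" unfolding p_def by (simp add: algebra_simps)
  show ?thesis using sp m1 m2 m3 p0 p1 peq dE dG ty by (simp add: abs_le_iff abs_less_iff)
qed

lemma cellapprox:
  assumes i: "i \<in> I" and Pp: "P \<in> pba \<Omega> A" and Pi: "P \<in> Pi_set \<Omega> A t i" and PE: "P E > 0"
    and G: "finite \<G>" "\<G> \<subseteq> A" and e: "\<epsilon> > 0"
  shows "\<exists>(V::('w set \<Rightarrow> real) set) w x. finite V \<and> V \<noteq> {} \<and> (\<forall>v\<in>V. 0 \<le> w v \<and> x v \<in> E)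
     \<and> (\<Sum>v\<in>V. w v) = 1 \<and> (\<forall>G\<in>\<G>. \<bar>(\<Sum>v\<in>V. w v * t i (x v) G) - P (G \<inter> E) / P E\<bar> < \<epsilon>)"
proof -
  have alg: "algebra \<Omega> A" by (rule ts_alg[OF ts])
  have iN: "i \<in> N" using i IN by blast
  have algM: "algebra \<Omega> (M i)" by (rule ts_algM[OF ts iN])
  have MA: "M i \<subseteq> A" by (rule ts_MA[OF ts iN])
  define \<delta> where "\<delta> = P E * \<epsilon> / 12"
  have d0: "\<delta> > 0" unfolding \<delta>_def using PE e by simp
  define G0 where "G0 = insert E \<G>"
  have G0A: "G0 \<subseteq> A" unfolding G0_def using G EA by blast
  have G0f: "finite G0" unfolding G0_def using G by simp
  have G0ne: "G0 \<noteq> {}" unfolding G0_def by simp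
  have ex: "\<exists>s. s \<in> simple_funs \<Omega> (M i) \<and> (\<forall>x\<in>\<Omega>. \<bar>t i x H - s x\<bar> < \<delta>)" if "H \<in> G0" for H
  proof -
    have "(\<lambda>\<omega>. t i \<omega> H) \<in> Bfun \<Omega> (M i)" using ts_B[OF ts iN] that G0A by blast
    then have "\<exists>s\<in>simple_funs \<Omega> (M i). \<forall>x\<in>\<Omega>. \<bar>t i x H - s x\<bar> < \<delta>" unfolding Bfun_def using d0 by blast
    then show ?thesis by blast
  qed
  have "\<forall>H\<in>G0. \<exists>s. s \<in> simple_funs \<Omega> (M i) \<and> (\<forall>x\<in>\<Omega>. \<bar>t i x H - s x\<bar> < \<delta>)" using ex by blast
  then have "\<exists>f. \<forall>H\<in>G0. f H \<in> simple_funs \<Omega> (M i) \<and> (\<forall>x\<in>\<Omega>. \<bar>t i x H - f H x\<bar> < \<delta>)" by (rule bchoice)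
  then obtain sG where sG: "\<forall>H\<in>G0. sG H \<in> simple_funs \<Omega> (M i) \<and> (\<forall>x\<in>\<Omega>. \<bar>t i x H - sG H x\<bar> < \<delta>)" by blast
  define \<sigma> where "\<sigma> x = restrict (\<lambda>H. sG H x) G0" for x
  define V0 where "V0 = \<sigma> ` \<Omega>"
  have V0f: "finite V0"
  proof -
    have "\<sigma> y \<in> PiE G0 (\<lambda>H. sG H ` \<Omega>)" if "y \<in> \<Omega>" for y
      unfolding \<sigma>_def restrict_PiE_iff using that by blast
    then have "V0 \<subseteq> PiE G0 (\<lambda>H. sG H ` \<Omega>)" unfolding V0_def by blast
    moreover have "finite (PiE G0 (\<lambda>H. sG H ` \<Omega>))"
    proof (rule finite_PiE[OF G0f])
      fix H assume "H \<in> G0"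
      then have "sG H \<in> simple_funs \<Omega> (M i)" using sG by blast
      then show "finite (sG H ` \<Omega>)" by (rule simple_finite_range)
    qed
    ultimately show ?thesis by (rule finite_subset)
  qed
  define C where "C v = {x\<in>\<Omega>. \<forall>H\<in>G0. sG H x = v H}" for v
  have CM: "C v \<in> M i" for v
  proof -
    have eq: "C v = (\<Inter>H\<in>G0. {x\<in>\<Omega>. sG H x = v H})" unfolding C_def using G0ne by blast
    have each: "{x\<in>\<Omega>. sG H x = v H} \<in> M i" if "H \<in> G0" for H
      using simple_pre[OF algM, of "sG H" "\<lambda>y. y = v H"] sG that by blast
    interpret algebra \<Omega> "M i" by (rule algM)
    show ?thesis unfolding eq using G0f G0ne each by (rule finite_INT)
  qed
  have CA: "C v \<in> A" for v using CM MA by blast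
  have memC: "x \<in> C (\<sigma> x)" if "x \<in> \<Omega>" for x unfolding C_def \<sigma>_def using that by simp
  have Ceq: "\<sigma> x = v" if vV: "v \<in> V0" and xC: "x \<in> C v" for v x
  proof -
    obtain y where y: "y \<in> \<Omega>" "v = \<sigma> y" using vV unfolding V0_def by blast
    have "\<forall>H\<in>G0. sG H x = sG H y" using xC y unfolding C_def \<sigma>_def by simp
    then show ?thesis unfolding y(2) \<sigma>_def by (intro restrict_ext) simp
  qed
  have disj: "\<forall>v\<in>V0. \<forall>u\<in>V0. v \<noteq> u \<longrightarrow> C v \<inter> C u = {}" using Ceq by blast
  have close: "\<bar>t i x H - t i y H\<bar> < 2 * \<delta>" if xC: "x \<in> C v" and yC: "y \<in> C v" and hH: "H \<in> G0" for x y v H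
  proof -
    have xy: "x \<in> \<Omega>" "y \<in> \<Omega>" "sG H x = sG H y" using xC yC hH unfolding C_def by auto
    have b: "\<forall>z\<in>\<Omega>. \<bar>t i z H - sG H z\<bar> < \<delta>" using sG hH by blast
    have "\<bar>t i x H - sG H x\<bar> < \<delta>" "\<bar>t i y H - sG H y\<bar> < \<delta>" using b xy(1,2) by auto
    then show ?thesis using xy(3) by linarith
  qed
  have cover: "Y \<subseteq> (\<Union>v\<in>V0. C v)" if "Y \<subseteq> \<Omega>" for Y
    using that memC unfolding V0_def by blast
  define V where "V = {v\<in>V0. C v \<inter> E \<noteq> {}}"
  define x where "x v = (SOME y. y \<in> C v \<inter> E)" for v
  have xv: "x v \<in> C v \<inter> E" if "v \<in> V" for v
  proof -
    have "\<exists>y. y \<in> C v \<inter> E" using that unfolding V_def by blast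
    then show ?thesis unfolding x_def by (rule someI_ex)
  qed
  have Vf: "finite V" unfolding V_def using V0f by simp
  have VV0: "V \<subseteq> V0" unfolding V_def by blast
  have Ene: "E \<noteq> {}" using PE pba_empty[OF alg Pp] by auto
  then obtain e0 where e0: "e0 \<in> E" by blast
  have e0O: "e0 \<in> \<Omega>" using e0 ES SO by blast
  have Vne: "V \<noteq> {}"
  proof -
    have "\<sigma> e0 \<in> V" unfolding V_def V0_def using e0 e0O memC[OF e0O] by blast
    then show ?thesis by blast
  qed
  have EO: "E \<subseteq> \<Omega>" using ES SO by blast
  have partE: "P Y = (\<Sum>v\<in>V. P (Y \<inter> C v))" if Y: "Y \<in> A" "Y \<subseteq> E" for Y
  proof -
    have "P Y = (\<Sum>v\<in>V0. P (Y \<inter> C v))"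
      using pba_partition[OF alg Pp V0f _ disj Y(1) cover] CA Y EO by blast
    also have "\<dots> = (\<Sum>v\<in>V. P (Y \<inter> C v))"
    proof (rule sum.mono_neutral_right[OF V0f VV0])
      show "\<forall>v\<in>V0 - V. P (Y \<inter> C v) = 0"
      proof
        fix v assume "v \<in> V0 - V"
        then have "Y \<inter> C v = {}" unfolding V_def using Y(2) by blast
        then show "P (Y \<inter> C v) = 0" using pba_empty[OF alg Pp] by simp
      qed
    qed
    finally show ?thesis .
  qed
  define w where "w v = P (E \<inter> C v) / P E" for v
  have w0: "0 \<le> w v" for v unfolding w_def using pba_vals(3)[OF Pp alg_facts(3)[OF alg EA CA]] PE by simp
  have wsum: "(\<Sum>v\<in>V. w v) = 1"
  proof -
    have "(\<Sum>v\<in>V. w v) = (\<Sum>v\<in>V. P (E \<inter> C v)) / P E" unfolding w_def by (simp add: sum_divide_distrib)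
    also have "(\<Sum>v\<in>V. P (E \<inter> C v)) = P E" using partE[OF EA subset_refl] by simp
    finally show ?thesis using PE by simp
  qed
  define G1 where "G1 = (\<lambda>p. fst p \<inter> E \<inter> C (snd p)) ` (\<G> \<times> V) \<union> (\<lambda>v. E \<inter> C v) ` V"
  have G1f: "finite G1" unfolding G1_def using G Vf by simp
  have G1A: "G1 \<subseteq> A" unfolding G1_def using G CA alg_facts(3)[OF alg] EA by auto
  define \<epsilon>' where "\<epsilon>' = P E * \<epsilon> / (8 * (real (card V) + 1))"
  have e'0: "\<epsilon>' > 0" unfolding \<epsilon>'_def using PE e by simp
  have Pi': "P \<in> wstar_top \<Omega> A closure_of conv_sf {restrict_sf A (t i \<omega>) | \<omega>. \<omega> \<in> \<Omega>}"
    using Pi unfolding Pi_set_def .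
  obtain \<nu> where nu: "\<nu> \<in> conv_sf {restrict_sf A (t i \<omega>) | \<omega>. \<omega> \<in> \<Omega>}" "\<forall>Y\<in>G1. \<bar>\<nu> Y - P Y\<bar> < \<epsilon>'"
    using closure_approx(2)[OF alg Pi' G1f G1A e'0] by blast
  obtain k :: nat and a \<omega> where k: "\<forall>j<k. 0 \<le> a j \<and> \<omega> j \<in> \<Omega>" "(\<Sum>j<k. a j) = 1"
    and nuv: "\<And>F. F \<in> A \<Longrightarrow> \<nu> F = (\<Sum>j<k. a j * t i (\<omega> j) F)"
    using conv_types_val[OF ts iN nu(1)] by blast
  define cnt where "cnt v = (\<Sum>j<k. a j * (if \<omega> j \<in> C v then 1 else 0))" for v
  have nu_cell: "\<nu> (Y \<inter> C v) = (\<Sum>j<k. a j * (if \<omega> j \<in> C v then 1 else 0) * t i (\<omega> j) Y)" if Y: "Y \<in> A" for Y v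
  proof -
    have "\<nu> (Y \<inter> C v) = (\<Sum>j<k. a j * t i (\<omega> j) (Y \<inter> C v))" by (rule nuv[OF alg_facts(3)[OF alg Y CA]])
    also have "\<dots> = (\<Sum>j<k. a j * (if \<omega> j \<in> C v then 1 else 0) * t i (\<omega> j) Y)"
    proof (rule sum.cong[OF refl])
      fix j assume "j \<in> {..<k}"
      then have "\<omega> j \<in> \<Omega>" using k(1) by blast
      then show "a j * t i (\<omega> j) (Y \<inter> C v) = a j * (if \<omega> j \<in> C v then 1 else 0) * t i (\<omega> j) Y"
        using t_cell[OF ts iN _ CM Y] by simp
    qed
    finally show ?thesis .
  qed
  have cnt0: "0 \<le> cnt v" for v unfolding cnt_def using k(1) by (intro sum_nonneg) simp
  have cnt_sum: "(\<Sum>v\<in>V. cnt v) \<le> 1"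
  proof -
    have "(\<Sum>v\<in>V. cnt v) = (\<Sum>j<k. a j * (\<Sum>v\<in>V. (if \<omega> j \<in> C v then 1 else 0)))"
      unfolding cnt_def by (simp add: sum.swap[of _ V] sum_distrib_left)
    also have "\<dots> \<le> (\<Sum>j<k. a j * 1)"
    proof (rule sum_mono)
      fix j assume j: "j \<in> {..<k}"
      have "(\<Sum>v\<in>V. (if \<omega> j \<in> C v then 1 else 0)) \<le> (\<Sum>v\<in>V. (if v = \<sigma> (\<omega> j) then 1 else 0::real))"
      proof (rule sum_mono)
        fix v assume v: "v \<in> V"
        show "(if \<omega> j \<in> C v then 1 else 0) \<le> (if v = \<sigma> (\<omega> j) then 1 else 0::real)"
          using Ceq[of v "\<omega> j"] v VV0 by auto
      qed
      also have "\<dots> \<le> 1" using Vf by simp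
      finally show "a j * (\<Sum>v\<in>V. (if \<omega> j \<in> C v then 1 else 0)) \<le> a j * 1"
        using k(1) j by (intro mult_left_mono) auto
    qed
    also have "\<dots> = 1" using k(2) by simp
    finally show ?thesis .
  qed
  have main: "\<bar>(\<Sum>v\<in>V. w v * t i (x v) Gx) - P (Gx \<inter> E) / P E\<bar> < \<epsilon>" if Gx: "Gx \<in> \<G>" for Gx
  proof -
    have GA: "Gx \<in> A" using Gx G by blast
    have GG0: "Gx \<in> G0" "E \<in> G0" unfolding G0_def using Gx by auto
    have GEA: "Gx \<inter> E \<in> A" by (rule alg_facts(3)[OF alg GA EA])
    define tm where "tm v = P (Gx \<inter> E \<inter> C v) - P (E \<inter> C v) * t i (x v) Gx" for v
    have tmb: "\<bar>tm v\<bar> \<le> 2 * \<epsilon>' + 6 * \<delta> * cnt v" if v: "v \<in> V" for v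
    proof -
      have xvv: "x v \<in> C v" "x v \<in> E" using xv[OF v] by auto
      have xO: "x v \<in> \<Omega>" using xvv EO by blast
      have a1: "\<bar>\<nu> (Gx \<inter> E \<inter> C v) - P (Gx \<inter> E \<inter> C v)\<bar> < \<epsilon>'"
      proof -
        have "Gx \<inter> E \<inter> C v \<in> G1" unfolding G1_def using Gx v by force
        then show ?thesis using nu(2) by blast
      qed
      have a2: "\<bar>\<nu> (E \<inter> C v) - P (E \<inter> C v)\<bar> < \<epsilon>'"
      proof -
        have "E \<inter> C v \<in> G1" unfolding G1_def using v by blast
        then show ?thesis using nu(2) by blast
      qed
      define tx where "tx = t i (x v) Gx"
      have tx01: "0 \<le> tx" "tx \<le> 1" unfolding tx_def using t_nonneg[OF ts iN xO GA] t_le1[OF ts iN xO GA] by auto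
      have Dv: "\<bar>\<nu> (Gx \<inter> E \<inter> C v) - \<nu> (E \<inter> C v) * tx\<bar> \<le> 6 * \<delta> * cnt v"
      proof -
        have e1: "\<nu> (Gx \<inter> E \<inter> C v) = (\<Sum>j<k. a j * (if \<omega> j \<in> C v then 1 else 0) * t i (\<omega> j) (Gx \<inter> E))"
          by (rule nu_cell[OF GEA])
        have e2: "\<nu> (E \<inter> C v) = (\<Sum>j<k. a j * (if \<omega> j \<in> C v then 1 else 0) * t i (\<omega> j) E)"
          by (rule nu_cell[OF EA])
        have "\<nu> (Gx \<inter> E \<inter> C v) - \<nu> (E \<inter> C v) * tx =
          (\<Sum>j<k. a j * (if \<omega> j \<in> C v then 1 else 0) * (t i (\<omega> j) (Gx \<inter> E) - t i (\<omega> j) E * tx))"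
        proof -
          have e3: "\<nu> (E \<inter> C v) * tx = (\<Sum>j<k. a j * (if \<omega> j \<in> C v then 1 else 0) * t i (\<omega> j) E * tx)"
            unfolding e2 by (rule sum_distrib_right)
          show ?thesis unfolding e1 e3 sum_subtractf[symmetric]
            by (rule sum.cong[OF refl]) (simp add: algebra_simps)
        qed
        also have "\<bar>\<dots>\<bar> \<le> (\<Sum>j<k. \<bar>a j * (if \<omega> j \<in> C v then 1 else 0) * (t i (\<omega> j) (Gx \<inter> E) - t i (\<omega> j) E * tx)\<bar>)"
          by (rule sum_abs)
        also have "\<dots> \<le> (\<Sum>j<k. a j * (if \<omega> j \<in> C v then 1 else 0) * (6 * \<delta>))"
        proof (rule sum_mono)
          fix j assume j: "j \<in> {..<k}"
          have aj: "0 \<le> a j" "\<omega> j \<in> \<Omega>" using k(1) j by auto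
          show "\<bar>a j * (if \<omega> j \<in> C v then 1 else 0) * (t i (\<omega> j) (Gx \<inter> E) - t i (\<omega> j) E * tx)\<bar>
              \<le> a j * (if \<omega> j \<in> C v then 1 else 0) * (6 * \<delta>)"
          proof (cases "\<omega> j \<in> C v")
            case True
            have "\<bar>t i (\<omega> j) (Gx \<inter> E) - t i (\<omega> j) E * tx\<bar> \<le> 6 * \<delta>"
              unfolding tx_def
              by (rule ptw[OF i aj(2) xvv(2) GA close[OF True xvv(1) GG0(2)] close[OF True xvv(1) GG0(1)]])
            then show ?thesis using True aj(1) by (simp add: abs_mult mult_left_mono)
          next
            case False
            then show ?thesis by simp
          qed
        qed
        also have "\<dots> = 6 * \<delta> * cnt v" unfolding cnt_def by (simp add: sum_distrib_left algebra_simps)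
        finally show ?thesis .
      qed
      have a3: "\<bar>\<nu> (E \<inter> C v) * tx - P (E \<inter> C v) * tx\<bar> \<le> \<epsilon>'"
      proof -
        have "\<bar>\<nu> (E \<inter> C v) * tx - P (E \<inter> C v) * tx\<bar> = \<bar>\<nu> (E \<inter> C v) - P (E \<inter> C v)\<bar> * tx"
          using tx01 by (simp add: left_diff_distrib[symmetric] abs_mult)
        also have "\<dots> \<le> \<epsilon>' * 1" using a2 tx01 by (intro mult_mono) auto
        finally show ?thesis by simp
      qed
      have "tm v = (P (Gx \<inter> E \<inter> C v) - \<nu> (Gx \<inter> E \<inter> C v)) + (\<nu> (Gx \<inter> E \<inter> C v) - \<nu> (E \<inter> C v) * tx)
          + (\<nu> (E \<inter> C v) * tx - P (E \<inter> C v) * tx)"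
        unfolding tm_def tx_def by simp
      then show ?thesis using a1 Dv a3 by linarith
    qed
    have sumtm: "\<bar>\<Sum>v\<in>V. tm v\<bar> \<le> 2 * \<epsilon>' * real (card V) + 6 * \<delta>"
    proof -
      have "\<bar>\<Sum>v\<in>V. tm v\<bar> \<le> (\<Sum>v\<in>V. \<bar>tm v\<bar>)" by (rule sum_abs)
      also have "\<dots> \<le> (\<Sum>v\<in>V. 2 * \<epsilon>' + 6 * \<delta> * cnt v)" by (rule sum_mono) (rule tmb)
      also have "\<dots> = 2 * \<epsilon>' * real (card V) + 6 * \<delta> * (\<Sum>v\<in>V. cnt v)"
        by (simp add: sum.distrib sum_distrib_left)
      also have "\<dots> \<le> 2 * \<epsilon>' * real (card V) + 6 * \<delta> * 1"
        using cnt_sum d0 by (intro add_left_mono mult_left_mono) auto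
      finally show ?thesis by simp
    qed
    have PGE: "P (Gx \<inter> E) = (\<Sum>v\<in>V. P (Gx \<inter> E \<inter> C v))" by (rule partE[OF GEA]) blast
    have sw: "(\<Sum>v\<in>V. w v * t i (x v) Gx) = (\<Sum>v\<in>V. P (E \<inter> C v) * t i (x v) Gx) / P E"
      unfolding w_def by (simp add: sum_divide_distrib)
    have diff: "(\<Sum>v\<in>V. w v * t i (x v) Gx) - P (Gx \<inter> E) / P E = - (\<Sum>v\<in>V. tm v) / P E"
      unfolding sw PGE tm_def by (simp add: sum_subtractf diff_divide_distrib)
    have cV: "2 * \<epsilon>' * real (card V) \<le> P E * \<epsilon> / 4"
    proof -
      have "2 * \<epsilon>' * real (card V) = (P E * \<epsilon> / 4) * (real (card V) / (real (card V) + 1))"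
        unfolding \<epsilon>'_def by (simp add: field_simps)
      also have "\<dots> \<le> (P E * \<epsilon> / 4) * 1" using PE e by (intro mult_left_mono) auto
      finally show ?thesis by simp
    qed
    have pe: "P E * \<epsilon> > 0" using PE e by simp
    have "6 * \<delta> = P E * \<epsilon> / 2" unfolding \<delta>_def by simp
    then have "\<bar>\<Sum>v\<in>V. tm v\<bar> < P E * \<epsilon>" using sumtm cV pe by linarith
    then have "\<bar>\<Sum>v\<in>V. tm v\<bar> / P E < \<epsilon>" using PE by (simp add: divide_less_eq mult.commute)
    then show ?thesis unfolding diff using PE by simp
  qed
  show ?thesis
    apply (rule exI[of _ V])
    apply (rule exI[of _ w])
    apply (rule exI[of _ x])
    using Vf Vne w0 xv wsum main by blast
qed

end



context
  fixes \<Omega> :: "'w set" and A :: "'w set set" and N :: "'i set"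
    and M :: "'i \<Rightarrow> 'w set set" and t :: "'i \<Rightarrow> 'w \<Rightarrow> 'w set \<Rightarrow> real"
    and I :: "'i set" and S :: "'w set" and E :: "'w set"
  assumes ts: "type_space \<Omega> A N M t" and IN: "I \<subseteq> N" and SO: "S \<subseteq> \<Omega>"
    and EA: "E \<in> A" and ES: "E \<subseteq> S" and Eone: "\<forall>\<omega>\<in>S. \<forall>i\<in>I. t i \<omega> E = 1"
begin

lemma fwd_dir:
  assumes Ine: "I \<noteq> {}" and Pp: "P \<in> pba \<Omega> A" and PPi: "\<forall>i\<in>I. P \<in> Pi_set \<Omega> A t i"
    and cpos: "Inf {P E | E. E \<in> A \<and> S \<subseteq> E} > 0"
  shows "\<exists>Q. \<forall>i\<in>I. Q \<in> Pi_set S (trace_field A S) (induced_t A S t) i"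
proof -
  have alg: "algebra \<Omega> A" by (rule ts_alg[OF ts])
  have talg: "algebra S (trace_field A S)" by (rule trace_alg[OF alg SO])
  have PE: "P E > 0" by (rule posE[OF ts IN SO EA ES Eone Ine Pp PPi cpos])
  define Q where "Q H = (if H \<in> trace_field A S then P (repr A S H \<inter> E) / P E else 0)" for H
  have Qval: "Q (F \<inter> S) = P (F \<inter> E) / P E" if F: "F \<in> A" for F
    unfolding Q_def using trace_mem[OF F] repr_E[OF ts IN SO EA ES Eone F refl] by simp
  have Qpba: "Q \<in> pba S (trace_field A S)" unfolding pba_def
  proof (intro CollectI conjI allI impI ballI)
    fix H assume "H \<notin> trace_field A S" then show "Q H = 0" unfolding Q_def by simp
  next
    fix H1 H2 assume H1: "H1 \<in> trace_field A S" and H2: "H2 \<in> trace_field A S" and d: "H1 \<inter> H2 = {}"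
    obtain F1 where F1: "F1 \<in> A" "H1 = F1 \<inter> S" using H1 unfolding trace_field_def by blast
    obtain F2 where F2: "F2 \<in> A" "H2 = F2 \<inter> S" using H2 unfolding trace_field_def by blast
    have U: "F1 \<union> F2 \<in> A" by (rule alg_facts(4)[OF alg F1(1) F2(1)])
    have HU: "H1 \<union> H2 = (F1 \<union> F2) \<inter> S" using F1 F2 by blast
    have a1: "F1 \<inter> E \<in> A" by (rule alg_facts(3)[OF alg F1(1) EA])
    have a2: "F2 \<inter> E \<in> A" by (rule alg_facts(3)[OF alg F2(1) EA])
    have dd: "(F1 \<inter> E) \<inter> (F2 \<inter> E) = {}" using d F1 F2 ES by blast
    have eqU: "(F1 \<union> F2) \<inter> E = (F1 \<inter> E) \<union> (F2 \<inter> E)" by blast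
    have "Q (H1 \<union> H2) = P ((F1 \<union> F2) \<inter> E) / P E" unfolding HU by (rule Qval[OF U])
    also have "\<dots> = (P (F1 \<inter> E) + P (F2 \<inter> E)) / P E" unfolding eqU using pba_vals(2)[OF Pp a1 a2 dd] by simp
    also have "\<dots> = Q H1 + Q H2" unfolding F1(2) F2(2) Qval[OF F1(1)] Qval[OF F2(1)] by (simp add: add_divide_distrib)
    finally show "Q (H1 \<union> H2) = Q H1 + Q H2" .
  next
    fix H assume H: "H \<in> trace_field A S"
    then obtain F where F: "F \<in> A" "H = F \<inter> S" unfolding trace_field_def by blast
    have "F \<inter> E \<in> A" by (rule alg_facts(3)[OF alg F(1) EA])
    then show "0 \<le> Q H" unfolding F(2) Qval[OF F(1)] using pba_vals(3)[OF Pp] PE by simp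
  next
    have O: "\<Omega> \<in> A" by (rule alg_facts(2)[OF alg])
    have "S = \<Omega> \<inter> S" "\<Omega> \<inter> E = E" using SO ES by auto
    then show "Q S = 1" using Qval[OF O] PE by simp
  qed
  have "Q \<in> Pi_set S (trace_field A S) (induced_t A S t) i" if i: "i \<in> I" for i
    unfolding Pi_set_def
  proof (rule approx_closure[OF talg ind_conv_pba[OF ts IN SO EA ES Eone i] Qpba])
    fix \<G>' :: "'w set set" and \<epsilon> :: real assume G': "finite \<G>'" "\<G>' \<subseteq> trace_field A S" and e: "\<epsilon> > 0"
    have Gf: "finite (repr A S ` \<G>')" using G'(1) by simp
    have GA: "repr A S ` \<G>' \<subseteq> A" using G'(2) repr_mem(1) by blast
    have Pi: "P \<in> Pi_set \<Omega> A t i" using PPi i by blast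
    obtain V :: "('w set \<Rightarrow> real) set" and w x where V: "finite V" "V \<noteq> {}" "\<forall>v\<in>V. 0 \<le> w v \<and> x v \<in> E"
      "(\<Sum>v\<in>V. w v) = 1" "\<forall>G\<in>repr A S ` \<G>'. \<bar>(\<Sum>v\<in>V. w v * t i (x v) G) - P (G \<inter> E) / P E\<bar> < \<epsilon>"
      using cellapprox[OF ts IN SO EA ES Eone i Pp Pi PE Gf GA e] by blast
    define \<nu> where "\<nu> = (\<lambda>H. \<Sum>v\<in>V. w v * restrict_sf (trace_field A S) (induced_t A S t i (x v)) H)"
    have nuc: "\<nu> \<in> conv_sf {restrict_sf (trace_field A S) (induced_t A S t i \<omega>) | \<omega>. \<omega> \<in> S}"
      unfolding \<nu>_def
    proof (rule conv_intro[OF V(1,2)])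
      show "\<forall>v\<in>V. 0 \<le> w v" "(\<Sum>v\<in>V. w v) = 1" using V(3,4) by auto
      show "\<forall>v\<in>V. restrict_sf (trace_field A S) (induced_t A S t i (x v)) \<in> {restrict_sf (trace_field A S) (induced_t A S t i \<omega>) | \<omega>. \<omega> \<in> S}"
        using V(3) ES by blast
    qed
    have "\<forall>H\<in>\<G>'. \<bar>\<nu> H - Q H\<bar> < \<epsilon>"
    proof
      fix H assume H: "H \<in> \<G>'"
      have Ht: "H \<in> trace_field A S" using H G'(2) by blast
      have "\<nu> H = (\<Sum>v\<in>V. w v * t i (x v) (repr A S H))"
        unfolding \<nu>_def restrict_sf_def induced_t_repr using Ht by simp
      moreover have "Q H = P (repr A S H \<inter> E) / P E" unfolding Q_def using Ht by simp
      moreover have "repr A S H \<in> repr A S ` \<G>'" using H by blast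
      moreover have "\<bar>(\<Sum>v\<in>V. w v * t i (x v) (repr A S H)) - P (repr A S H \<inter> E) / P E\<bar> < \<epsilon>"
        using V(5) H by blast
      ultimately show "\<bar>\<nu> H - Q H\<bar> < \<epsilon>" by simp
    qed
    then show "\<exists>\<nu>\<in>conv_sf {restrict_sf (trace_field A S) (induced_t A S t i \<omega>) | \<omega>. \<omega> \<in> S}. \<forall>H\<in>\<G>'. \<bar>\<nu> H - Q H\<bar> < \<epsilon>"
      using nuc by blast
  qed
  then show ?thesis by blast
qed

end

lemma dirac_case:
  assumes alg: "algebra \<Omega> A" and S: "S \<noteq> {}" "S \<subseteq> \<Omega>"
  shows "\<exists>P\<in>pba \<Omega> A. Inf {P E | E. E \<in> A \<and> S \<subseteq> E} > 0"
proof -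
  obtain w0 where w0: "w0 \<in> S" using S by blast
  define P where "P F = (if F \<in> A then (if w0 \<in> F then 1 else 0) else 0::real)" for F
  have O: "\<Omega> \<in> A" by (rule alg_facts(2)[OF alg])
  have Pp: "P \<in> pba \<Omega> A" unfolding pba_def
  proof (intro CollectI conjI allI impI ballI)
    fix F assume "F \<notin> A" then show "P F = 0" unfolding P_def by simp
  next
    fix F G assume F: "F \<in> A" and G: "G \<in> A" and d: "F \<inter> G = {}"
    have "F \<union> G \<in> A" by (rule alg_facts(4)[OF alg F G])
    then show "P (F \<union> G) = P F + P G" unfolding P_def using F G d by auto
  next
    fix F show "0 \<le> P F" unfolding P_def by simp
  next
    show "P \<Omega> = 1" unfolding P_def using O w0 S by auto
  qed
  have PS: "P F = 1" if "F \<in> A" "S \<subseteq> F" for F unfolding P_def using that w0 by auto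
  have "{P E | E. E \<in> A \<and> S \<subseteq> E} = {1}"
  proof
    show "{P E | E. E \<in> A \<and> S \<subseteq> E} \<subseteq> {1}" using PS by blast
    have "P \<Omega> \<in> {P E | E. E \<in> A \<and> S \<subseteq> E}" using O S by blast
    then show "{1} \<subseteq> {P E | E. E \<in> A \<and> S \<subseteq> E}" using PS[OF O S(2)] by simp
  qed
  then have "Inf {P E | E. E \<in> A \<and> S \<subseteq> E} > 0" by simp
  then show ?thesis by (rule bexI[OF _ Pp])
qed

theorem proposition4:
  fixes \<Omega> :: "'w set" and A :: "'w set set" and N :: "'i set"
    and M :: "'i \<Rightarrow> 'w set set" and t :: "'i \<Rightarrow> 'w \<Rightarrow> 'w set \<Rightarrow> real"
  assumes "type_space \<Omega> A N M t"
  shows "universally_consistent \<Omega> A N t \<longleftrightarrow>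
    (\<forall>I S. finite I \<and> I \<subseteq> N \<and> common_certainty_component \<Omega> A t I S \<longrightarrow>
       consistent S (trace_field A S) I (induced_t A S t))"
proof
  have ts: "type_space \<Omega> A N M t" by (rule assms)
  assume UC: "universally_consistent \<Omega> A N t"
  show "\<forall>I S. finite I \<and> I \<subseteq> N \<and> common_certainty_component \<Omega> A t I S \<longrightarrow>
       consistent S (trace_field A S) I (induced_t A S t)"
  proof (intro allI impI)
    fix I S assume h: "finite I \<and> I \<subseteq> N \<and> common_certainty_component \<Omega> A t I S"
    have IN: "I \<subseteq> N" using h by blast
    obtain E where E: "E \<in> A" "E \<subseteq> S" "\<forall>\<omega>\<in>S. \<forall>i\<in>I. t i \<omega> E = 1" and SO: "S \<subseteq> \<Omega>"
      using h unfolding common_certainty_component_def by blast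
    show "consistent S (trace_field A S) I (induced_t A S t)" unfolding consistent_def
    proof (intro allI impI)
      fix J assume J: "finite J \<and> J \<subseteq> I"
      show "(\<Inter>i\<in>J. Pi_set S (trace_field A S) (induced_t A S t) i) \<noteq> {}"
      proof (cases "I = {}")
        case True
        then have "J = {}" using J by blast
        then show ?thesis by simp
      next
        case False
        obtain P where P: "P \<in> pba \<Omega> A" "\<forall>i\<in>I. P \<in> Pi_set \<Omega> A t i" "Inf {P E | E. E \<in> A \<and> S \<subseteq> E} > 0"
          using UC h unfolding universally_consistent_def by blast
        obtain Q where Q: "\<forall>i\<in>I. Q \<in> Pi_set S (trace_field A S) (induced_t A S t) i"
          using fwd_dir[OF ts IN SO E False P] by blast
        then have "Q \<in> (\<Inter>i\<in>J. Pi_set S (trace_field A S) (induced_t A S t) i)" using J by blast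
        then show ?thesis by blast
      qed
    qed
  qed
next
  have ts: "type_space \<Omega> A N M t" by (rule assms)
  assume R: "\<forall>I S. finite I \<and> I \<subseteq> N \<and> common_certainty_component \<Omega> A t I S \<longrightarrow>
       consistent S (trace_field A S) I (induced_t A S t)"
  show "universally_consistent \<Omega> A N t" unfolding universally_consistent_def
  proof (intro allI impI)
    fix I S assume h: "finite I \<and> I \<subseteq> N \<and> common_certainty_component \<Omega> A t I S"
    have IN: "I \<subseteq> N" using h by blast
    obtain E where E: "E \<in> A" "E \<subseteq> S" "\<forall>\<omega>\<in>S. \<forall>i\<in>I. t i \<omega> E = 1" and SO: "S \<subseteq> \<Omega>" and Sne: "S \<noteq> {}"
      using h unfolding common_certainty_component_def by blast
    show "\<exists>P\<in>pba \<Omega> A. (\<forall>i\<in>I. P \<in> Pi_set \<Omega> A t i) \<and> Inf {P E | E. E \<in> A \<and> S \<subseteq> E} > 0"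
    proof (cases "I = {}")
      case True
      then show ?thesis using dirac_case[OF ts_alg[OF ts] Sne SO] by simp
    next
      case False
      have "consistent S (trace_field A S) I (induced_t A S t)" using R h by blast
      then have "(\<Inter>i\<in>I. Pi_set S (trace_field A S) (induced_t A S t) i) \<noteq> {}"
        unfolding consistent_def using h by blast
      then obtain Q where "Q \<in> (\<Inter>i\<in>I. Pi_set S (trace_field A S) (induced_t A S t) i)" by blast
      then have Q: "\<forall>i\<in>I. Q \<in> Pi_set S (trace_field A S) (induced_t A S t) i" by blast
      show ?thesis by (rule back_dir[OF ts IN SO E False Q])
    qed
  qed
qed



end
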